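(* There exists a function $f_*$ in the Schwartz space $\mathcal S(\overline{\mathbb{R}_+})$ such that (i) $f_*>0$ on $\mathbb{R}_+$ and $f_*(0)=1$; (ii) $\int_0^\infty\bigl(|f_*'(t)|^2+(t-\hat\alpha)^2|f_*(t)|^2\bigr)dt=\hat\alpha$; (iii) $\int_0^\infty(t-\hat\alpha)|f_*(t)|^2dt=0$, $\int_0^\infty(t-\hat\alpha)^2|f_*(t)|^2dt=\frac{\hat\alpha}{4}$, and $\int_0^\infty(t-\hat\alpha)^3|f_*(t)|^2dt=\frac16(1-2\hat\alpha^2)$; (iv) $\int_0^\infty f_*'(t)f_*(t)dt=-\frac12$ and $\int_0^\infty t|f_*'(t)|^2dt=\frac13+\frac{\hat\alpha^2}{12}$.
   Context: $\hat\alpha=\alpha/\sqrt2$, where $-\alpha$ is the unique negative zero of the parabolic cylinder function $D_{1/2}$ (the solution of $w''+(1-\tfrac{z^2}{4})w=0$ with $D_{1/2}(z)=e^{-z^2/4}z^{1/2}(1+O(z^{-2}))$ as $z\to+\infty$). Equivalently, $\hat\alpha=\inf\{\int_0^\infty(|f'|^2+(t-\xi)^2|f|^2)dt/|f(0)|^2:\ f(0)\neq0,\ \xi\in\mathbb{R}\}$. *)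

theory Defs
  imports "HOL-Analysis.Analysis"
begin

definition schwartz_halfline :: "(real \<Rightarrow> 'a::real_normed_vector) \<Rightarrow> bool" where
  "schwartz_halfline f \<longleftrightarrow>
     (\<exists>D :: nat \<Rightarrow> real \<Rightarrow> 'a.
        (\<forall>t\<ge>0. D 0 t = f t) \<and>
        (\<forall>k. \<forall>t\<ge>0. (D k has_vector_derivative D (Suc k) t) (at t within {0..})) \<and>
        (\<forall>k m. \<exists>C. \<forall>t\<ge>0. t ^ m * norm (D k t) \<le> C))"

definition hderiv :: "(real \<Rightarrow> 'a::real_normed_vector) \<Rightarrow> real \<Rightarrow> 'a" where
  "hderiv f t = vector_derivative f (at t within {0..})"

definition alpha_hat :: real where
  "alpha_hat = Inf {(LINT t:{0..}|lborel. (cmod (hderiv f t))\<^sup>2 + (t - \<xi>)\<^sup>2 * (cmod (f t))\<^sup>2)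
                     / (cmod (f 0))\<^sup>2
                   | (f :: real \<Rightarrow> complex) \<xi>. schwartz_halfline f \<and> f 0 \<noteq> 0}"

end

theory Submission
  imports Defs "HOL-Probability.Sinc_Integral" "HOL-Real_Asymp.Real_Asymp" "HOL-Computational_Algebra.Polynomial"
begin

fun cc :: "nat \<Rightarrow> real" where
  "cc 0 = 1"
| "cc (Suc k) = cc k / ((4 * real k + 4) * (4 * real k + 3))"

lemma cc_pos: "cc k > 0"
  by (induction k) auto

lemma cc_summable: "summable (\<lambda>n. cc n * z ^ n)"
proof (rule summable_ratio_test[where c="1/2" and N="nat \<lceil>\<bar>z\<bar>\<rceil>"])
  fix n assume n: "nat \<lceil>\<bar>z\<bar>\<rceil> \<le> n"
  have zn: "\<bar>z\<bar> \<le> real n" using n by linarith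
  have d: "(4 * real n + 4) * (4 * real n + 3) \<ge> 2 * \<bar>z\<bar>"
  proof -
    have "(4 * real n + 4) * (4 * real n + 3) \<ge> 2 * real n" by (simp add: algebra_simps)
    then show ?thesis using zn by linarith
  qed
  have "norm (cc (Suc n) * z ^ Suc n) = cc n * \<bar>z\<bar> ^ n * (\<bar>z\<bar> / ((4 * real n + 4) * (4 * real n + 3)))"
    using cc_pos[of n] by (simp add: abs_mult power_abs)
  also have "\<dots> \<le> cc n * \<bar>z\<bar> ^ n * (1/2)"
  proof (intro mult_left_mono)
    have "(4 * real n + 4) * (4 * real n + 3) > 0" by simp
    then show "\<bar>z\<bar> / ((4 * real n + 4) * (4 * real n + 3)) \<le> 1/2"
      using d by (simp add: divide_le_eq)
  qed (use cc_pos[of n] in auto)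
  also have "\<dots> = 1/2 * norm (cc n * z ^ n)"
    using cc_pos[of n] by (simp add: abs_mult power_abs)
  finally show "norm (cc (Suc n) * z ^ Suc n) \<le> 1/2 * norm (cc n * z ^ n)" .
qed simp

definition Y :: "real \<Rightarrow> real" where "Y z = (\<Sum>n. cc n * z ^ n)"
definition Y1 :: "real \<Rightarrow> real" where "Y1 z = (\<Sum>n. diffs cc n * z ^ n)"
definition Y2 :: "real \<Rightarrow> real" where "Y2 z = (\<Sum>n. diffs (diffs cc) n * z ^ n)"

lemma sum1: "summable (\<lambda>n. diffs cc n * z ^ n)"
  by (rule termdiff_converges_all) (use cc_summable in auto)
lemma sum2: "summable (\<lambda>n. diffs (diffs cc) n * z ^ n)"
  by (rule termdiff_converges_all) (use sum1 in auto)

lemma Y_deriv: "(Y has_real_derivative Y1 z) (at z)"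
  unfolding Y_def[abs_def] Y1_def using termdiffs_strong_converges_everywhere[OF cc_summable] by blast
lemma Y1_deriv: "(Y1 has_real_derivative Y2 z) (at z)"
  unfolding Y1_def[abs_def] Y2_def using termdiffs_strong_converges_everywhere[OF sum1] by blast

lemma Y_ode: "16 * z * Y2 z + 12 * Y1 z = Y z"
proof -
  let ?f = "\<lambda>m. real m * (real m + 1) * cc (Suc m) * z ^ m"
  have a: "(\<lambda>n. z * (diffs (diffs cc) n * z ^ n)) sums (z * Y2 z)"
    unfolding Y2_def by (intro sums_mult summable_sums sum2)
  have "(\<lambda>n. ?f (Suc n)) = (\<lambda>n. z * (diffs (diffs cc) n * z ^ n))"
    by (auto simp: diffs_def algebra_simps simp del: cc.simps)
  with a have "(\<lambda>n. ?f (Suc n)) sums (z * Y2 z)" by simp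
  then have b: "?f sums (z * Y2 z)" using sums_Suc_iff[of ?f] by simp
  have c: "(\<lambda>n. diffs cc n * z ^ n) sums Y1 z" unfolding Y1_def by (intro summable_sums sum1)
  have "(\<lambda>n. 16 * ?f n + 12 * (diffs cc n * z ^ n)) sums (16 * (z * Y2 z) + 12 * Y1 z)"
    by (intro sums_add sums_mult b c)
  moreover have "(\<lambda>n. 16 * ?f n + 12 * (diffs cc n * z ^ n)) = (\<lambda>n. cc n * z ^ n)"
  proof
    fix n
    have e: "cc (Suc n) * ((4 * real n + 4) * (4 * real n + 3)) = cc n" by simp
    have "16 * ?f n + 12 * (diffs cc n * z ^ n) = cc (Suc n) * ((4 * real n + 4) * (4 * real n + 3)) * z ^ n"
      unfolding diffs_def by (simp add: algebra_simps del: cc.simps)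
    then show "16 * ?f n + 12 * (diffs cc n * z ^ n) = cc n * z ^ n" using e by simp
  qed
  ultimately have "(\<lambda>n. cc n * z ^ n) sums (16 * (z * Y2 z) + 12 * Y1 z)" by simp
  then show ?thesis unfolding Y_def using sums_unique by (metis mult.assoc)
qed

lemma cc_nonneg[simp]: "cc k \<ge> 0" using cc_pos[of k] by simp

lemma Y_ge: assumes "z \<ge> 0" shows "Y z \<ge> cc k * z ^ k" "Y z \<ge> 1"
proof -
  have "sum (\<lambda>n. cc n * z ^ n) {k} \<le> Y z" unfolding Y_def
    by (rule sum_le_suminf[OF cc_summable]) (use assms in \<open>auto intro!: mult_nonneg_nonneg\<close>)
  then show "Y z \<ge> cc k * z ^ k" by simp
  have "sum (\<lambda>n. cc n * z ^ n) {0} \<le> Y z" unfolding Y_def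
    by (rule sum_le_suminf[OF cc_summable]) (use assms in \<open>auto intro!: mult_nonneg_nonneg\<close>)
  then show "Y z \<ge> 1" by simp
qed

lemma Y1_ge: assumes "z \<ge> 0" shows "Y1 z \<ge> diffs cc k * z ^ k" "Y1 z \<ge> 0"
proof -
  have dp: "diffs cc n \<ge> 0" for n by (simp add: diffs_def del: cc.simps)
  have "sum (\<lambda>n. diffs cc n * z ^ n) {k} \<le> Y1 z" unfolding Y1_def
    by (rule sum_le_suminf[OF sum1]) (use assms dp in \<open>auto\<close>)
  then show "Y1 z \<ge> diffs cc k * z ^ k" by simp
  have "sum (\<lambda>n. diffs cc n * z ^ n) {} \<le> Y1 z" unfolding Y1_def
    by (rule sum_le_suminf[OF sum1]) (use assms dp in \<open>auto\<close>)
  then show "Y1 z \<ge> 0" by simp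
qed

definition y :: "real \<Rightarrow> real" where "y x = Y (x ^ 4)"
definition y' :: "real \<Rightarrow> real" where "y' x = 4 * x ^ 3 * Y1 (x ^ 4)"

lemma y_deriv: "(y has_real_derivative y' x) (at x)"
proof -
  have "((\<lambda>x. Y (x^4)) has_real_derivative Y1 (x^4) * (real 4 * x^(4 - Suc 0))) (at x)"
    by (rule DERIV_chain2[OF Y_deriv DERIV_pow])
  then show ?thesis unfolding y_def[abs_def] y'_def by (simp add: algebra_simps)
qed

lemma y'_deriv: "(y' has_real_derivative x\<^sup>2 * y x) (at x)"
proof -
  have "(y' has_real_derivative (12 * x^2 * Y1 (x^4) + 4 * x^3 * (Y2 (x^4) * (4 * x^3)))) (at x)"
    unfolding y'_def[abs_def]
    by (auto intro!: derivative_eq_intros DERIV_chain2[OF Y1_deriv])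
  moreover have "12 * x^2 * Y1 (x^4) + 4 * x^3 * (Y2 (x^4) * (4 * x^3)) = x\<^sup>2 * y x"
  proof -
    have "12 * x^2 * Y1 (x^4) + 4 * x^3 * (Y2 (x^4) * (4 * x^3)) = x\<^sup>2 * (16 * x^4 * Y2 (x^4) + 12 * Y1 (x^4))"
      by (simp add: algebra_simps power2_eq_square power3_eq_cube power4_eq_xxxx)
    then show ?thesis using Y_ode[of "x^4"] unfolding y_def by simp
  qed
  ultimately show ?thesis by simp
qed

lemma y_ge1: "y x \<ge> 1" unfolding y_def by (rule Y_ge) simp
lemma y_pos: "y x > 0" using y_ge1[of x] by simp
lemma y_ge: "y x \<ge> cc k * x ^ (4*k)" unfolding y_def using Y_ge(1)[of "x^4" k] by (simp add: power_mult)
lemma y'_nonneg: "x \<ge> 0 \<Longrightarrow> y' x \<ge> 0" unfolding y'_def using Y1_ge(2)[of "x^4"] by simp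
lemma y'_nonpos: "x \<le> 0 \<Longrightarrow> y' x \<le> 0"
proof -
  assume x: "x \<le> 0"
  have "x^3 \<le> 0" using x by (metis mult_nonneg_nonpos power3_eq_cube zero_le_square)
  then show ?thesis unfolding y'_def using Y1_ge(2)[of "x^4"] by (simp add: mult_nonpos_nonneg)
qed
lemma y'_ge: "x \<ge> 0 \<Longrightarrow> y' x \<ge> 4 * diffs cc k * x ^ (4*k+3)"
proof -
  assume x: "x \<ge> 0"
  have "4 * x^3 * Y1 (x^4) \<ge> 4 * x^3 * (diffs cc k * (x^4)^k)"
    using Y1_ge(1)[of "x^4" k] x by (intro mult_left_mono) auto
  moreover have "4 * x^3 * (diffs cc k * (x^4)^k) = 4 * diffs cc k * x ^ (4*k+3)"
    by (simp only: power_mult[symmetric] power_add) (simp add: algebra_simps)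
  ultimately show ?thesis unfolding y'_def by simp
qed

lemma y_cont: "isCont y x" using y_deriv DERIV_isCont by blast
lemma y'_cont: "isCont y' x" using y'_deriv DERIV_isCont by blast

definition hh :: "real \<Rightarrow> real" where "hh x = 1 / (y x)^2"

lemma hh_pos: "hh x > 0" using y_pos[of x] by (simp add: hh_def)

lemma hh_cont: "isCont hh x"
  unfolding hh_def using y_pos[of x] by (intro continuous_intros y_cont) auto

definition H :: "real \<Rightarrow> real" where "H x = interval_lebesgue_integral lborel (ereal 0) (ereal x) hh"

lemma H_deriv: "(H has_real_derivative hh x) (at x)"
proof -
  define a where "a = -\<bar>x\<bar> - 1"
  define b where "b = \<bar>x\<bar> + 1"
  have c: "continuous_on {a..b} hh" by (intro continuous_at_imp_continuous_on ballI hh_cont)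
  have "((\<lambda>u. LBINT y=ereal 0..u. hh y) has_vector_derivative hh x) (at x within {a..b})"
    by (rule interval_integral_FTC2) (use c in \<open>auto simp: a_def b_def\<close>)
  moreover have "at x within {a..b} = at x" by (rule at_within_Icc_at) (auto simp: a_def b_def)
  ultimately have "(H has_vector_derivative hh x) (at x)" unfolding H_def[abs_def] by simp
  then show ?thesis using has_real_derivative_iff_has_vector_derivative by blast
qed

lemma H_mono: "x < z \<Longrightarrow> H x < H z"
  by (rule DERIV_pos_imp_increasing) (use H_deriv hh_pos in blast)+

lemma y'_mono: assumes "x \<le> z" shows "y' x \<le> y' z"
proof (rule DERIV_nonneg_imp_nondecreasing[OF assms])
  fix u show "\<exists>d. (y' has_real_derivative d) (at u) \<and> d \<ge> 0"
    using y'_deriv[of u] y_pos[of u] by (intro exI[of _ "u\<^sup>2 * y u"]) auto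
qed

lemma dcc0: "diffs cc 0 = 1/12" by (simp add: diffs_def)

lemma y'_pos: "x > 0 \<Longrightarrow> y' x > 0"
proof -
  assume x: "x > 0"
  have "y' x \<ge> 4 * diffs cc 0 * x ^ (4*0+3)" using y'_ge[of x 0] x by simp
  moreover have "4 * diffs cc 0 * x ^ (4*0+3) > 0" using x by (simp add: dcc0)
  ultimately show ?thesis by linarith
qed

lemma H_bound:
  assumes x: "0 < x" and T: "x \<le> T"
  shows "H T + 1 / (y' x * y T) \<le> H x + 1 / (y' x * y x)"
proof -
  let ?P = "\<lambda>u. H u + 1 / (y' x * y u)"
  have yx: "y' x > 0" using y'_pos x by simp
  have "?P T \<le> ?P x"
  proof (rule DERIV_nonpos_imp_nonincreasing[OF T])
    fix u assume u: "x \<le> u" "u \<le> T"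
    have yu: "y u > 0" using y_pos by simp
    have d: "(?P has_real_derivative (hh u - y' x * y' u / (y' x * y u)^2)) (at u)"
      using yx yu by (auto intro!: derivative_eq_intros H_deriv y_deriv simp: field_simps power2_eq_square)
    have "y' u \<ge> y' x" using y'_mono u by simp
    then have "y' x * y' u / (y' x * y u)^2 \<ge> y' x * y' x / (y' x * y u)^2"
      using yx by (intro divide_right_mono mult_left_mono) auto
    also have "y' x * y' x / (y' x * y u)^2 = hh u"
      using yx yu by (simp add: hh_def power2_eq_square)
    finally show "\<exists>d. (?P has_real_derivative d) (at u) \<and> d \<le> 0" using d by (intro exI[of _ "hh u - y' x * y' u / (y' x * y u)^2"]) auto
  qed
  then show ?thesis by simp
qed

lemma H_bound': "0 < x \<Longrightarrow> H T \<le> H x + 1 / (y' x * y x)"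
proof (cases "x \<le> T")
  case True
  assume x: "0 < x"
  have "1 / (y' x * y T) \<ge> 0" using y'_pos[OF x] y_pos[of T] by simp
  then show ?thesis using H_bound[OF x True] by linarith
next
  case False
  assume x: "0 < x"
  have "H T < H x" using False H_mono by simp
  moreover have "1 / (y' x * y x) \<ge> 0" using y'_pos[OF x] y_pos[of x] by simp
  ultimately show ?thesis by linarith
qed

lemma H_bdd: "bdd_above (range H)"
  by (rule bdd_aboveI[of _ "H 1 + 1 / (y' 1 * y 1)"]) (use H_bound'[of 1] in auto)

definition LL :: real where "LL = Sup (range H)"
definition J :: "real \<Rightarrow> real" where "J x = LL - H x"

lemma J_pos: "J x > 0"
proof -
  have "H x < H (x+1)" by (rule H_mono) simp
  also have "H (x+1) \<le> LL" unfolding LL_def by (rule cSup_upper[OF _ H_bdd]) simp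
  finally show ?thesis by (simp add: J_def)
qed

lemma J_le: assumes x: "0 < x" shows "J x \<le> 1 / (y' x * y x)"
proof -
  have "LL \<le> H x + 1 / (y' x * y x)" unfolding LL_def
    by (rule cSup_least) (use H_bound'[OF x] in auto)
  then show ?thesis by (simp add: J_def)
qed

lemma J_deriv: "(J has_real_derivative - hh x) (at x)"
  unfolding J_def[abs_def] by (auto intro!: derivative_eq_intros H_deriv)

definition g :: "real \<Rightarrow> real" where "g x = y x * J x"
definition g' :: "real \<Rightarrow> real" where "g' x = y' x * J x - 1 / y x"

lemma g_deriv: "(g has_real_derivative g' x) (at x)"
proof -
  have "(g has_real_derivative (y' x * J x + y x * (- hh x))) (at x)"
    unfolding g_def[abs_def] by (auto intro!: derivative_eq_intros y_deriv J_deriv)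
  moreover have "y' x * J x + y x * (- hh x) = g' x"
    using y_pos[of x] by (simp add: g'_def hh_def power2_eq_square)
  ultimately show ?thesis by simp
qed

lemma g'_deriv: "(g' has_real_derivative x\<^sup>2 * g x) (at x)"
proof -
  have "(g' has_real_derivative (x\<^sup>2 * y x * J x + y' x * (- hh x) + y' x / (y x)^2)) (at x)"
    unfolding g'_def[abs_def] using y_pos[of x]
    by (auto intro!: derivative_eq_intros y_deriv J_deriv y'_deriv simp: power2_eq_square)
  moreover have "x\<^sup>2 * y x * J x + y' x * (- hh x) + y' x / (y x)^2 = x\<^sup>2 * g x"
    by (simp add: g_def hh_def)
  ultimately show ?thesis by simp
qed

lemma g_pos: "g x > 0" using y_pos[of x] J_pos[of x] by (simp add: g_def)

lemma g'_nonpos_pos: assumes x: "x > 0" shows "g' x \<le> 0" "g' x \<ge> - 1 / y x"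
proof -
  have yx: "y' x > 0" "y x > 0" using y'_pos[OF x] y_pos by auto
  have "y' x * J x \<le> y' x * (1 / (y' x * y x))" using J_le[OF x] yx by (intro mult_left_mono) auto
  also have "\<dots> = 1 / y x" using yx by simp
  finally show "g' x \<le> 0" by (simp add: g'_def)
  have "y' x * J x \<ge> 0" using yx J_pos[of x] by simp
  then show "g' x \<ge> - 1 / y x" by (simp add: g'_def)
qed

lemma g'_neg: "g' x < 0"
proof (cases "x \<le> 0")
  case True
  have "y' x * J x \<le> 0" using y'_nonpos[OF True] J_pos[of x] by (simp add: mult_nonpos_nonneg)
  moreover have "1 / y x > 0" using y_pos[of x] by simp
  ultimately show ?thesis unfolding g'_def by linarith
next
  case False
  then have x: "x > 0" by simp
  have "g' x < g' (x+1)"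
  proof (rule DERIV_pos_imp_increasing[of x "x+1" g'])
    show "x < x + 1" by simp
  next
    fix u assume "x \<le> u" "u \<le> x + 1"
    then have "u > 0" using x by simp
    then show "\<exists>d. (g' has_real_derivative d) (at u) \<and> d > 0"
      using g'_deriv g_pos by (intro exI[of _ "u\<^sup>2 * g u"]) auto
  qed
  also have "g' (x+1) \<le> 0" using g'_nonpos_pos(1)[of "x+1"] x by simp
  finally show ?thesis .
qed

lemma g_le: "x > 0 \<Longrightarrow> g x \<le> 1 / y' x"
proof -
  assume x: "x > 0"
  have yx: "y' x > 0" "y x > 0" using y'_pos[OF x] y_pos by auto
  have "y x * J x \<le> y x * (1 / (y' x * y x))" using J_le[OF x] yx by (intro mult_left_mono) auto
  then show ?thesis using yx by (simp add: g_def)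
qed

lemma g'_abs_le: "x > 0 \<Longrightarrow> \<bar>g' x\<bar> \<le> 1 / y x"
  using g'_nonpos_pos[of x] by auto

lemma g_antimono: assumes "x \<le> z" shows "g z \<le> g x"
proof (rule DERIV_nonpos_imp_nonincreasing[OF assms])
  fix u show "\<exists>d. (g has_real_derivative d) (at u) \<and> d \<le> 0"
    using g_deriv[of u] g'_neg[of u] by (intro exI[of _ "g' u"]) auto
qed

lemma g'_mono: assumes "x \<le> z" shows "g' x \<le> g' z"
proof (rule DERIV_nonneg_imp_nondecreasing[OF assms])
  fix u show "\<exists>d. (g' has_real_derivative d) (at u) \<and> d \<ge> 0"
    using g'_deriv[of u] g_pos[of u] by (intro exI[of _ "u\<^sup>2 * g u"]) auto
qed

lemma g_cont: "isCont g x" using g_deriv DERIV_isCont by blast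
lemma g'_cont: "isCont g' x" using g'_deriv DERIV_isCont by blast

definition W :: "real \<Rightarrow> real" where "W s = - g' s / g s"

lemma W_pos: "W s > 0" using g_pos[of s] g'_neg[of s] by (simp add: W_def divide_neg_pos)

lemma W_deriv: "(W has_real_derivative (W s)^2 - s^2) (at s)"
proof -
  have gs: "g s \<noteq> 0" using g_pos[of s] by simp
  show ?thesis
    unfolding W_def[abs_def] using gs
    by (auto intro!: derivative_eq_intros g_deriv g'_deriv simp: field_simps power2_eq_square)
qed

lemma W_cont: "isCont W s" using W_deriv DERIV_isCont by blast

lemma barrier:
  fixes D D' :: "real \<Rightarrow> real"
  assumes ab: "a \<le> b" and Da: "D a \<le> 0"
    and deriv: "\<And>s. a \<le> s \<Longrightarrow> s \<le> b \<Longrightarrow> (D has_real_derivative D' s) (at s)"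
    and neg: "\<And>s. a \<le> s \<Longrightarrow> s < b \<Longrightarrow> D s = 0 \<Longrightarrow> D' s < 0"
  shows "D b \<le> 0"
proof (rule ccontr)
  assume "\<not> D b \<le> 0" hence Db: "D b > 0" by simp
  have isc: "\<And>s. a \<le> s \<Longrightarrow> s \<le> b \<Longrightarrow> isCont D s" using deriv DERIV_isCont by blast
  have cont: "continuous_on {a..b} D" using isc by (intro continuous_at_imp_continuous_on) auto
  define Z where "Z = {a..b} \<inter> D -` {..0}"
  have closedZ: "closed Z" unfolding Z_def by (rule continuous_closed_preimage[OF cont]) auto
  have aZ: "a \<in> Z" using ab Da by (auto simp: Z_def)
  have bddZ: "bdd_above Z" unfolding Z_def by (auto intro: bdd_aboveI[of _ b])
  define s0 where "s0 = Sup Z"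
  have s0Z: "s0 \<in> Z" unfolding s0_def using closed_contains_Sup[OF _ bddZ closedZ] aZ by auto
  have s0le: "\<And>z. z \<in> Z \<Longrightarrow> z \<le> s0" unfolding s0_def using bddZ by (simp add: cSup_upper)
  have s0a: "a \<le> s0" and s0b': "s0 \<le> b" and Ds0: "D s0 \<le> 0" using s0Z by (auto simp: Z_def)
  have s0b: "s0 < b" using s0b' Ds0 Db by (cases "s0 = b") auto
  have D0: "D s0 = 0"
  proof (rule ccontr)
    assume "D s0 \<noteq> 0" hence neg0: "D s0 < 0" using Ds0 by simp
    have "\<exists>x. s0 \<le> x \<and> x \<le> b \<and> D x = 0"
      by (rule IVT) (use neg0 Db s0b isc s0a in auto)
    then obtain z where z: "s0 \<le> z" "z \<le> b" "D z = 0" by blast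
    then have "z \<in> Z" using s0a by (auto simp: Z_def)
    moreover have "z \<noteq> s0" using z neg0 by auto
    ultimately show False using s0le[of z] z by simp
  qed
  have "D' s0 < 0" by (rule neg[OF s0a s0b D0])
  from DERIV_neg_dec_right[OF deriv[OF s0a s0b'] this]
  obtain d where d: "d > 0" "\<And>h. h > 0 \<Longrightarrow> h < d \<Longrightarrow> D (s0 + h) < D s0" by blast
  define h where "h = min (d/2) ((b - s0)/2)"
  have "h \<le> (b - s0)/2" unfolding h_def by (rule min.cobounded2)
  then have h: "h > 0" "h < d" "s0 + h \<le> b" using d s0b by (auto simp: h_def)
  then have "D (s0 + h) < 0" using d D0 by auto
  then have "s0 + h \<in> Z" using h s0a by (auto simp: Z_def)
  then show False using s0le h by fastforce
qed

lemma barrier_all: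
  fixes D D' :: "real \<Rightarrow> real"
  assumes Da: "D a \<le> 0"
    and deriv: "\<And>s. a \<le> s \<Longrightarrow> s \<le> b \<Longrightarrow> (D has_real_derivative D' s) (at s)"
    and neg: "\<And>s. a \<le> s \<Longrightarrow> s < b \<Longrightarrow> D s = 0 \<Longrightarrow> D' s < 0"
    and s: "a \<le> s" "s \<le> b"
  shows "D s \<le> 0"
  by (rule barrier[of a s D D']) (use assms in auto)

lemma sq_le: "0 < (u::real) \<Longrightarrow> u \<le> v \<Longrightarrow> u^2 \<le> v^2"
  by (simp add: power_mono)

lemma R1:
  assumes s1: "s1 \<le> -(W 0 + 2)"
  shows "W s1 > W 0"
proof (rule ccontr)
  define m0 where "m0 = W 0"
  have m0: "m0 > 0" using W_pos unfolding m0_def by simp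
  assume "\<not> W s1 > W 0" hence Ws1: "W s1 \<le> m0" unfolding m0_def by simp
  define b where "b = -(m0 + 1)"
  define k where "k = 2 * m0 + 1/2"
  have "(\<lambda>s. W s - (m0 - k * (s - s1))) b \<le> 0"
  proof (rule barrier[where D = "\<lambda>s. W s - (m0 - k * (s - s1))" and D' = "\<lambda>s. (W s)^2 - s^2 + k"])
    show "s1 \<le> b" using s1 unfolding b_def m0_def by simp
    show "W s1 - (m0 - k * (s1 - s1)) \<le> 0" using Ws1 by simp
    fix s assume s: "s1 \<le> s" "s \<le> b"
    show "((\<lambda>s. W s - (m0 - k * (s - s1))) has_real_derivative (W s)^2 - s^2 + k) (at s)"
      by (auto intro!: derivative_eq_intros W_deriv)
  next
    fix s assume s: "s1 \<le> s" "s < b" and z: "W s - (m0 - k * (s - s1)) = 0"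
    have "k * (s - s1) \<ge> 0" using s m0 unfolding k_def by (intro mult_nonneg_nonneg) auto
    then have "W s \<le> m0" using z by linarith
    then have a1: "(W s)^2 \<le> m0^2" using W_pos[of s] by (intro sq_le) auto
    have "m0 + 1 \<le> - s" using s unfolding b_def by simp
    then have "(m0+1)^2 \<le> (-s)^2" using m0 by (intro sq_le) auto
    then have a2: "(m0+1)^2 \<le> s^2" by simp
    show "(W s)^2 - s^2 + k < 0" using a1 a2 unfolding k_def by (simp add: power2_eq_square algebra_simps)
  qed
  then have "W b \<le> m0 - k * (b - s1)" by simp
  moreover have "k * (b - s1) \<ge> k * 1" using s1 m0 unfolding b_def k_def m0_def by (intro mult_left_mono) auto
  moreover have "m0 - k * 1 < 0" unfolding k_def using m0 by simp
  ultimately have "W b < 0" by linarith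
  then show False using W_pos[of b] by simp
qed

lemma R2:
  assumes s1: "s1 > 0"
  shows "W s1 > s1"
proof (rule ccontr)
  assume "\<not> W s1 > s1" hence Ws1: "W s1 \<le> s1" by simp
  define s2 where "s2 = 3 * s1 + 3"
  define w2 where "w2 = 2 * s1 + 3/2"
  have "(\<lambda>s. W s - (s + s1) / 2) s2 \<le> 0"
  proof (rule barrier[where D = "\<lambda>s. W s - (s + s1) / 2" and D' = "\<lambda>s. (W s)^2 - s^2 - 1/2"])
    show "s1 \<le> s2" using s1 unfolding s2_def by simp
    show "W s1 - (s1 + s1) / 2 \<le> 0" using Ws1 by simp
    fix s assume s: "s1 \<le> s" "s \<le> s2"
    show "((\<lambda>s. W s - (s + s1) / 2) has_real_derivative (W s)^2 - s^2 - 1/2) (at s)"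
      by (auto intro!: derivative_eq_intros W_deriv)
  next
    fix s assume s: "s1 \<le> s" "s < s2" and z: "W s - (s + s1) / 2 = 0"
    have "W s \<le> s" using z s by simp
    then have "(W s)^2 \<le> s^2" using W_pos[of s] by (intro sq_le) auto
    then show "(W s)^2 - s^2 - 1/2 < 0" by simp
  qed
  then have Ws2: "W s2 \<le> w2" unfolding s2_def w2_def by simp
  define b where "b = s2 + w2 + 1"
  have "(\<lambda>s. W s - (w2 - (s - s2))) b \<le> 0"
  proof (rule barrier[where D = "\<lambda>s. W s - (w2 - (s - s2))" and D' = "\<lambda>s. (W s)^2 - s^2 + 1"])
    show "s2 \<le> b" using s1 unfolding b_def w2_def by simp
    show "W s2 - (w2 - (s2 - s2)) \<le> 0" using Ws2 by simp
    fix s assume s: "s2 \<le> s" "s \<le> b"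
    show "((\<lambda>s. W s - (w2 - (s - s2))) has_real_derivative (W s)^2 - s^2 + 1) (at s)"
      by (auto intro!: derivative_eq_intros W_deriv)
  next
    fix s assume s: "s2 \<le> s" "s < b" and z: "W s - (w2 - (s - s2)) = 0"
    have "W s \<le> w2" using z s by simp
    then have a1: "(W s)^2 \<le> w2^2" using W_pos[of s] by (intro sq_le) auto
    have "s2 > 0" using s1 unfolding s2_def by simp
    then have a2: "s2^2 \<le> s^2" using s by (intro sq_le) auto
    have a3: "s2^2 - w2^2 = 5 * s1^2 + 12 * s1 + 27/4"
      unfolding s2_def w2_def by (simp add: power2_eq_square algebra_simps)
    have "s1^2 \<ge> 0" by simp
    then show "(W s)^2 - s^2 + 1 < 0" using a1 a2 a3 s1 by linarith
  qed
  then have "W b \<le> -1" unfolding b_def by simp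
  then show False using W_pos[of b] by simp
qed

lemma R3:
  assumes s1: "s1 \<ge> 1"
  shows "W s1 \<le> 2 * s1"
proof (rule ccontr)
  assume "\<not> W s1 \<le> 2 * s1" hence Ws1: "W s1 > 2 * s1" by simp
  have ge: "W s \<ge> 2 * s" if s: "s1 \<le> s" "s \<le> s1 + 2" for s
  proof -
    have "(\<lambda>s. 2 * s - W s) s \<le> 0"
    proof (rule barrier_all[where D = "\<lambda>s. 2 * s - W s" and D' = "\<lambda>s. 2 - ((W s)^2 - s^2)" and a = s1 and b = "s1 + 2"])
      show "2 * s1 - W s1 \<le> 0" using Ws1 by simp
      fix s assume s: "s1 \<le> s" "s \<le> s1 + 2"
      show "((\<lambda>s. 2 * s - W s) has_real_derivative 2 - ((W s)^2 - s^2)) (at s)"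
        by (auto intro!: derivative_eq_intros W_deriv)
    next
      fix s assume s: "s1 \<le> s" "s < s1 + 2" and z: "2 * s - W s = 0"
      have "W s = 2 * s" using z by simp
      then have "(W s)^2 - s^2 = 3 * s^2" by (simp add: power2_eq_square)
      moreover have "s^2 \<ge> 1" using one_le_power[of s 2] s s1 by linarith
      ultimately show "2 - ((W s)^2 - s^2) < 0" by linarith
    qed (use s in auto)
    then show ?thesis by simp
  qed
  have "(\<lambda>s. 1 / W s + 3/4 * s) (s1 + 2) \<le> (\<lambda>s. 1 / W s + 3/4 * s) s1"
  proof (rule DERIV_nonpos_imp_nonincreasing[where f = "\<lambda>s. 1 / W s + 3/4 * s"])
    show "s1 \<le> s1 + 2" by simp
  next
    fix s assume s: "s1 \<le> s" "s \<le> s1 + 2"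
    have Wp: "W s > 0" using W_pos by simp
    have d: "((\<lambda>s. 1 / W s + 3/4 * s) has_real_derivative (- ((W s)^2 - s^2) / (W s)^2 + 3/4)) (at s)"
      using Wp by (auto intro!: derivative_eq_intros W_deriv simp: power2_eq_square field_simps)
    have "2 * s \<le> W s" using ge s by simp
    moreover have "s \<ge> 0" using s s1 by simp
    ultimately have "(2 * s)^2 \<le> (W s)^2" by (intro power_mono) auto
    then have "4 * s^2 \<le> (W s)^2" by (simp add: power2_eq_square)
    then have "(W s)^2 - s^2 \<ge> 3/4 * (W s)^2" by simp
    then have "((W s)^2 - s^2) / (W s)^2 \<ge> 3/4" using Wp by (simp add: field_simps)
    moreover have "- ((W s)^2 - s^2) / (W s)^2 = - (((W s)^2 - s^2) / (W s)^2)" by (rule minus_divide_left[symmetric])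
    ultimately have "- ((W s)^2 - s^2) / (W s)^2 + 3/4 \<le> 0" by linarith
    then show "\<exists>d. ((\<lambda>s. 1 / W s + 3/4 * s) has_real_derivative d) (at s) \<and> d \<le> 0" using d by blast
  qed
  moreover have "3/4 * (s1 + 2) = 3/4 * s1 + 3/2" by simp
  ultimately have "1 / W (s1 + 2) \<le> 1 / W s1 - 3/2" by linarith
  moreover have "1 / W s1 < 1 / 2"
  proof -
    have "W s1 > 2" using Ws1 s1 by simp
    then show ?thesis by (simp add: field_simps)
  qed
  ultimately have "1 / W (s1 + 2) < 0" by linarith
  then show False using W_pos[of "s1+2"] by simp
qed

lemma W_min_exists: "\<exists>a>0. W (-a) = a \<and> (\<forall>s. a \<le> W s)"
proof -
  define m0 where "m0 = W 0"
  have m0: "m0 > 0" using W_pos unfolding m0_def by simp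
  have "\<exists>x\<in>{-(m0+2)..m0}. \<forall>z\<in>{-(m0+2)..m0}. W x \<le> W z"
    by (rule continuous_attains_inf) (use m0 W_cont in \<open>auto intro!: continuous_at_imp_continuous_on\<close>)
  then obtain s where sK: "s \<in> {-(m0+2)..m0}" and smin: "\<And>z. z \<in> {-(m0+2)..m0} \<Longrightarrow> W s \<le> W z" by blast
  have Ws0: "W s \<le> m0" using smin[of 0] m0 unfolding m0_def by simp
  have glob: "W s \<le> W z" for z
  proof (cases "z \<in> {-(m0+2)..m0}")
    case True then show ?thesis using smin by simp
  next
    case False
    then consider "z < -(m0+2)" | "z > m0" by auto
    then show ?thesis
    proof cases
      case 1 then have "W z > m0" using R1[of z] unfolding m0_def by simp
      then show ?thesis using Ws0 by simp
    next
      case 2 then have "W z > z" using R2[of z] m0 by simp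
      then show ?thesis using Ws0 2 by simp
    qed
  qed
  have "(W s)^2 - s^2 = 0"
    by (rule DERIV_local_min[OF W_deriv, of 1]) (use glob in auto)
  then have e: "(W s)^2 = s^2" by simp
  have sneg: "s < 0"
  proof (rule ccontr)
    assume "\<not> s < 0"
    then consider "s = 0" | "s > 0" by linarith
    then show False
    proof cases
      case 1 then show False using e W_pos[of s] by simp
    next
      case 2
      then have "W s = s" using e W_pos[of s] by (simp add: power2_eq_iff_nonneg less_imp_le)
      then show False using R2[OF 2] by simp
    qed
  qed
  have "W s = -s" using e W_pos[of s] sneg
    by (metis abs_of_neg abs_of_pos power2_eq_iff_nonneg abs_ge_zero less_imp_le power2_abs)
  then show ?thesis using sneg glob by (intro exI[of _ "-s"]) auto
qed

definition aa :: real where "aa = (SOME a. a > 0 \<and> W (-a) = a \<and> (\<forall>s. a \<le> W s))"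

lemma aa: "aa > 0" "W (-aa) = aa" "\<And>s. aa \<le> W s"
  using someI_ex[OF W_min_exists] unfolding aa_def by auto

definition rapid :: "(real \<Rightarrow> real) \<Rightarrow> bool" where
  "rapid \<phi> \<longleftrightarrow> (\<forall>m::nat. \<exists>C. \<forall>t\<ge>0. (1+t)^m * \<bar>\<phi> t\<bar> \<le> C)"

definition pb :: "(real \<Rightarrow> real) \<Rightarrow> bool" where
  "pb \<psi> \<longleftrightarrow> (\<exists>A (n::nat). \<forall>t\<ge>0. \<bar>\<psi> t\<bar> \<le> A * (1+t)^n)"

lemma pow_mono1: "(t::real) \<ge> 0 \<Longrightarrow> n \<le> k \<Longrightarrow> (1+t)^n \<le> (1+t)^k"
  by (rule power_increasing) auto

lemma pbI: "(\<And>t. t \<ge> 0 \<Longrightarrow> \<bar>\<psi> t\<bar> \<le> A * (1+t)^n) \<Longrightarrow> pb \<psi>"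
  unfolding pb_def by blast

lemma pbD: assumes "pb \<psi>" shows "\<exists>A n. A \<ge> 0 \<and> (\<forall>t\<ge>0. \<bar>\<psi> t\<bar> \<le> A * (1+t)^n)"
proof -
  from assms obtain A n where h: "\<And>t. t \<ge> 0 \<Longrightarrow> \<bar>\<psi> t\<bar> \<le> A * (1+t)^n" unfolding pb_def by blast
  have "A \<ge> 0" using h[of 0] by simp
  then show ?thesis using h by blast
qed

lemma pb_const[simp, intro]: "pb (\<lambda>t. c)"
  by (rule pbI[of _ "\<bar>c\<bar>" 0]) simp

lemma pb_id[simp, intro]: "pb (\<lambda>t. t)"
  by (rule pbI[of _ 1 1]) simp

lemma pb_add[intro]: assumes "pb f1" "pb f2" shows "pb (\<lambda>t. f1 t + f2 t)"
proof -
  obtain A n where A: "A \<ge> 0" "\<And>t. t \<ge> 0 \<Longrightarrow> \<bar>f1 t\<bar> \<le> A * (1+t)^n" using pbD[OF assms(1)] by blast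
  obtain B k where B: "B \<ge> 0" "\<And>t. t \<ge> 0 \<Longrightarrow> \<bar>f2 t\<bar> \<le> B * (1+t)^k" using pbD[OF assms(2)] by blast
  show ?thesis
  proof (rule pbI[of _ "A + B" "n + k"])
    fix t :: real assume t: "t \<ge> 0"
    have "\<bar>f1 t + f2 t\<bar> \<le> A * (1+t)^n + B * (1+t)^k" using A(2)[OF t] B(2)[OF t] by linarith
    also have "\<dots> \<le> A * (1+t)^(n+k) + B * (1+t)^(n+k)"
      using A B t by (intro add_mono mult_left_mono pow_mono1) auto
    finally show "\<bar>f1 t + f2 t\<bar> \<le> (A + B) * (1+t)^(n+k)" by (simp add: algebra_simps)
  qed
qed

lemma pb_mult[intro]: assumes "pb f1" "pb f2" shows "pb (\<lambda>t. f1 t * f2 t)"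
proof -
  obtain A n where A: "A \<ge> 0" "\<And>t. t \<ge> 0 \<Longrightarrow> \<bar>f1 t\<bar> \<le> A * (1+t)^n" using pbD[OF assms(1)] by blast
  obtain B k where B: "B \<ge> 0" "\<And>t. t \<ge> 0 \<Longrightarrow> \<bar>f2 t\<bar> \<le> B * (1+t)^k" using pbD[OF assms(2)] by blast
  show ?thesis
  proof (rule pbI[of _ "A * B" "n + k"])
    fix t :: real assume t: "t \<ge> 0"
    have "\<bar>f1 t * f2 t\<bar> = \<bar>f1 t\<bar> * \<bar>f2 t\<bar>" by (simp add: abs_mult)
    also have "\<dots> \<le> (A * (1+t)^n) * (B * (1+t)^k)"
      using A B t by (intro mult_mono) auto
    finally show "\<bar>f1 t * f2 t\<bar> \<le> (A * B) * (1+t)^(n+k)" by (simp add: algebra_simps power_add)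
  qed
qed

lemma pb_minus[intro]: "pb f1 \<Longrightarrow> pb (\<lambda>t. - f1 t)"
  unfolding pb_def by simp

lemma pb_diff[intro]: "pb f1 \<Longrightarrow> pb f2 \<Longrightarrow> pb (\<lambda>t. f1 t - f2 t)"
  using pb_add[of f1 "\<lambda>t. - f2 t"] pb_minus[of f2] by simp

lemma pb_pow[intro]: "pb f1 \<Longrightarrow> pb (\<lambda>t. f1 t ^ k)"
  by (induction k) (auto intro!: pb_mult)

lemma pb_poly[intro]: "pb (poly p)"
proof (induction p rule: pCons_induct)
  case 0 then show ?case by simp
next
  case (pCons a p)
  have "pb (\<lambda>t. a + t * poly p t)" using pCons by (intro pb_add pb_mult) auto
  then show ?case by simp
qed

lemma rapidI: "(\<And>m. \<exists>C. \<forall>t\<ge>0. (1+t)^m * \<bar>\<phi> t\<bar> \<le> C) \<Longrightarrow> rapid \<phi>"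
  unfolding rapid_def by blast

lemma rapid_pb: assumes "rapid \<phi>" shows "pb \<phi>"
proof -
  obtain C where "\<forall>t\<ge>0. (1+t)^0 * \<bar>\<phi> t\<bar> \<le> C" using assms unfolding rapid_def by blast
  then show ?thesis by (intro pbI[of _ C 0]) auto
qed

lemma rapid_pb_mult[intro]: assumes "rapid \<phi>" "pb \<psi>" shows "rapid (\<lambda>t. \<psi> t * \<phi> t)"
proof (rule rapidI)
  fix m
  obtain A n where A: "A \<ge> 0" "\<And>t. t \<ge> 0 \<Longrightarrow> \<bar>\<psi> t\<bar> \<le> A * (1+t)^n" using pbD[OF assms(2)] by blast
  obtain C where C: "\<And>t. t \<ge> 0 \<Longrightarrow> (1+t)^(m+n) * \<bar>\<phi> t\<bar> \<le> C" using assms(1) unfolding rapid_def by blast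
  show "\<exists>C. \<forall>t\<ge>0. (1+t)^m * \<bar>\<psi> t * \<phi> t\<bar> \<le> C"
  proof (intro exI allI impI)
    fix t :: real assume t: "t \<ge> 0"
    have "(1+t)^m * \<bar>\<psi> t * \<phi> t\<bar> = (1+t)^m * \<bar>\<psi> t\<bar> * \<bar>\<phi> t\<bar>" by (simp add: abs_mult)
    also have "\<dots> \<le> (1+t)^m * (A * (1+t)^n) * \<bar>\<phi> t\<bar>"
      using A t by (intro mult_right_mono mult_left_mono) auto
    also have "\<dots> = A * ((1+t)^(m+n) * \<bar>\<phi> t\<bar>)" by (simp add: power_add algebra_simps)
    also have "\<dots> \<le> A * C" using A C t by (intro mult_left_mono) auto
    finally show "(1+t)^m * \<bar>\<psi> t * \<phi> t\<bar> \<le> A * C" .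
  qed
qed

lemma rapid_mult[intro]: "rapid \<phi> \<Longrightarrow> rapid \<psi> \<Longrightarrow> rapid (\<lambda>t. \<phi> t * \<psi> t)"
  using rapid_pb_mult[of \<psi> \<phi>] rapid_pb[of \<phi>] by simp

lemma rapid_add[intro]: assumes "rapid \<phi>" "rapid \<psi>" shows "rapid (\<lambda>t. \<phi> t + \<psi> t)"
proof (rule rapidI)
  fix m
  obtain C where C: "\<And>t. t \<ge> 0 \<Longrightarrow> (1+t)^m * \<bar>\<phi> t\<bar> \<le> C" using assms(1) unfolding rapid_def by blast
  obtain D where D: "\<And>t. t \<ge> 0 \<Longrightarrow> (1+t)^m * \<bar>\<psi> t\<bar> \<le> D" using assms(2) unfolding rapid_def by blast
  show "\<exists>C. \<forall>t\<ge>0. (1+t)^m * \<bar>\<phi> t + \<psi> t\<bar> \<le> C"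
  proof (intro exI allI impI)
    fix t :: real assume t: "t \<ge> 0"
    have "(1+t)^m * \<bar>\<phi> t + \<psi> t\<bar> \<le> (1+t)^m * (\<bar>\<phi> t\<bar> + \<bar>\<psi> t\<bar>)"
      using t by (intro mult_left_mono abs_triangle_ineq) auto
    also have "\<dots> \<le> C + D" using C[OF t] D[OF t] by (simp add: algebra_simps)
    finally show "(1+t)^m * \<bar>\<phi> t + \<psi> t\<bar> \<le> C + D" .
  qed
qed

lemma rapid_cmult[intro]: "rapid \<phi> \<Longrightarrow> rapid (\<lambda>t. c * \<phi> t)"
  using rapid_pb_mult[of \<phi> "\<lambda>t. c"] by simp

lemma rapid_minus[intro]: "rapid \<phi> \<Longrightarrow> rapid (\<lambda>t. - \<phi> t)"
  using rapid_cmult[of \<phi> "-1"] by simp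

lemma rapid_diff[intro]: "rapid \<phi> \<Longrightarrow> rapid \<psi> \<Longrightarrow> rapid (\<lambda>t. \<phi> t - \<psi> t)"
  using rapid_add[of \<phi> "\<lambda>t. - \<psi> t"] by auto

lemma rapid_cong: "(\<And>t. t \<ge> 0 \<Longrightarrow> \<phi> t = \<psi> t) \<Longrightarrow> rapid \<phi> \<Longrightarrow> rapid \<psi>"
  unfolding rapid_def by (metis)

lemma pb_cong: "(\<And>t. t \<ge> 0 \<Longrightarrow> \<phi> t = \<psi> t) \<Longrightarrow> pb \<phi> \<Longrightarrow> pb \<psi>"
  unfolding pb_def by (metis)

lemma rapid_tendsto: assumes "rapid \<phi>" shows "(\<phi> \<longlongrightarrow> 0) at_top"
proof -
  obtain C where C: "\<And>t. t \<ge> 0 \<Longrightarrow> (1+t)^1 * \<bar>\<phi> t\<bar> \<le> C" using assms unfolding rapid_def by blast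
  show ?thesis
  proof (rule Lim_null_comparison)
    show "\<forall>\<^sub>F t in at_top. norm (\<phi> t) \<le> C / (1 + t)"
      using eventually_ge_at_top[of "0::real"]
      by eventually_elim (use C in \<open>auto simp: field_simps\<close>)
    show "((\<lambda>t. C / (1 + t)) \<longlongrightarrow> 0) at_top" by real_asymp
  qed
qed

lemma integrable_inv_sq: "integrable lborel (\<lambda>x::real. inverse (1 + x^2))"
  using integrable_inverse_1_plus_square unfolding set_integrable_def by simp

lemma rapid_integrable:
  assumes r: "rapid \<phi>" and c: "continuous_on {0..} \<phi>"
  shows "set_integrable lborel {0..} \<phi>"
proof -
  obtain C where C: "\<And>t. t \<ge> 0 \<Longrightarrow> (1+t)^2 * \<bar>\<phi> t\<bar> \<le> C" using r unfolding rapid_def by blast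
  have C0: "C \<ge> 0" using C[of 0] by simp
  show ?thesis unfolding set_integrable_def
  proof (rule Bochner_Integration.integrable_bound)
    show "integrable lborel (\<lambda>x. C * inverse (1 + x^2))" by (intro integrable_mult_right integrable_inv_sq)
    show "(\<lambda>x. indicat_real {0..} x *\<^sub>R \<phi> x) \<in> borel_measurable lborel"
      using borel_measurable_continuous_on_indicator[OF _ c] by simp
    show "AE x in lborel. norm (indicat_real {0..} x *\<^sub>R \<phi> x) \<le> norm (C * inverse (1 + x\<^sup>2))"
    proof (rule AE_I2)
      fix x :: real
      show "norm (indicat_real {0..} x *\<^sub>R \<phi> x) \<le> norm (C * inverse (1 + x\<^sup>2))"
      proof (cases "x \<ge> 0")
        case True
        have p: "(1+x)^2 \<ge> 1 + x^2" using True by (simp add: power2_eq_square algebra_simps)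
        have q: "0 < (1 + x)^2 * (1 + x^2)" using True by (intro mult_pos_pos) (auto simp: add_pos_nonneg)
        have "\<bar>\<phi> x\<bar> \<le> C / (1+x)^2" using C[OF True] True by (simp add: field_simps)
        also have "\<dots> \<le> C / (1 + x^2)" using p C0 q by (intro divide_left_mono) auto
        finally show ?thesis using True C0 by (simp add: field_simps abs_mult)
      qed (auto simp: C0)
    qed
  qed
qed

lemma AE_Ioi_Ici: "AE x in lborel. ((x::real) \<in> {0<..}) = (x \<in> {0..})"
  using AE_lborel_singleton[of "0::real"] by (rule eventually_mono) auto

lemma ftc0:
  fixes F F' :: "real \<Rightarrow> real"
  assumes F: "\<And>t. t \<ge> 0 \<Longrightarrow> (F has_real_derivative F' t) (at t within {0..})"
    and cF': "continuous_on {0..} F'" and rF: "rapid F" and rF': "rapid F'"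
  shows "(LINT t:{0..}|lborel. F' t) = - F 0"
proof -
  have int: "set_integrable lborel {0..} F'" by (rule rapid_integrable[OF rF' cF'])
  have int': "set_integrable lborel {0<..} F'" by (rule set_integrable_subset[OF int]) auto
  have "(LBINT x=ereal 0..\<infinity>. F' x) = 0 - F 0"
  proof (rule interval_integral_FTC_integrable)
    show "ereal 0 < \<infinity>" by simp
  next
    fix x assume x: "ereal 0 < ereal x" "ereal x < \<infinity>"
    then have x0: "x > 0" by simp
    have "(F has_real_derivative F' x) (at x within {0<..})"
      using F[of x] x0 by (auto intro: DERIV_subset)
    then have "(F has_real_derivative F' x) (at x)" using at_within_open[of x "{0<..}"] x0 by simp
    then show "(F has_vector_derivative F' x) (at x)" by (simp add: has_real_derivative_iff_has_vector_derivative)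
    have "continuous_on {0<..} F'" using cF' by (rule continuous_on_subset) auto
    then show "isCont F' x" using continuous_on_eq_continuous_at[of "{0<..}" F'] x0 by auto
  next
    show "set_integrable lborel (einterval (ereal 0) \<infinity>) F'" using int' by simp
  next
    have "continuous (at 0 within {0..}) F" using F[of 0] by (intro DERIV_continuous) auto
    then have "(F \<longlongrightarrow> F 0) (at 0 within {0..})" by (simp add: continuous_within)
    then have "(F \<longlongrightarrow> F 0) (at_right 0)" by (rule tendsto_within_subset) auto
    then show "((F \<circ> real_of_ereal) \<longlongrightarrow> F 0) (at_right (ereal 0))" unfolding ereal_tendsto_simps1 .
  next
    show "((F \<circ> real_of_ereal) \<longlongrightarrow> 0) (at_left \<infinity>)" unfolding ereal_tendsto_simps1 by (rule rapid_tendsto[OF rF])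
  qed
  then have e: "(LINT x:{0<..}|lborel. F' x) = - F 0" by (subst (asm) interval_integral_to_infinity_eq) simp
  have "(LINT x:{0..}|lborel. F' x) = (LINT x:{0<..}|lborel. F' x)"
  proof (rule set_integral_cong_set)
    show "set_borel_measurable lborel {0<..} F'" using int' unfolding set_integrable_def set_borel_measurable_def by auto
    show "set_borel_measurable lborel {0..} F'" using int unfolding set_integrable_def set_borel_measurable_def by auto
    show "AE x in lborel. ((x::real) \<in> {0<..}) = (x \<in> {0..})"
      by (rule AE_Ioi_Ici)
  qed
  then show ?thesis using e by simp
qed

definition fs :: "real \<Rightarrow> real" where "fs t = g (t - aa) / g (- aa)"
definition fs' :: "real \<Rightarrow> real" where "fs' t = g' (t - aa) / g (- aa)"

lemma gaa: "g (-aa) > 0" using g_pos by simp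

lemma fs_deriv: "(fs has_real_derivative fs' t) (at t)"
proof -
  have "((\<lambda>t. g (t - aa)) has_real_derivative g' (t - aa) * 1) (at t)"
    by (rule DERIV_chain2[OF g_deriv]) (auto intro!: derivative_eq_intros)
  then show ?thesis unfolding fs_def[abs_def] fs'_def using gaa by (auto intro!: derivative_eq_intros)
qed

lemma fs'_deriv: "(fs' has_real_derivative (t - aa)^2 * fs t) (at t)"
proof -
  have "((\<lambda>t. g' (t - aa)) has_real_derivative (t - aa)^2 * g (t - aa) * 1) (at t)"
    by (rule DERIV_chain2[OF g'_deriv]) (auto intro!: derivative_eq_intros)
  then show ?thesis unfolding fs_def fs'_def[abs_def] using gaa by (auto intro!: derivative_eq_intros)
qed

lemma fs_0: "fs 0 = 1" using gaa by (simp add: fs_def)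
lemma fs'_0: "fs' 0 = - aa"
proof -
  have "fs' 0 = g' (-aa) / g (-aa)" by (simp add: fs'_def)
  also have "\<dots> = - W (-aa)" by (simp add: W_def)
  finally show ?thesis using aa(2) by simp
qed

lemma fs_pos: "fs t > 0" using g_pos[of "t - aa"] gaa by (simp add: fs_def)

lemma fs_cont: "isCont fs t" using fs_deriv DERIV_isCont by blast
lemma fs'_cont: "isCont fs' t" using fs'_deriv DERIV_isCont by blast

lemma pow_le_pow_ge1: "(x::real) \<ge> 1 \<Longrightarrow> m \<le> n \<Longrightarrow> x^m \<le> x^n"
  by (rule power_increasing) auto

lemma rapid_shift:
  fixes G :: "real \<Rightarrow> real"
  assumes a: "a \<ge> 0"
    and K: "\<And>m. \<exists>K. \<forall>x\<ge>1. x^m * \<bar>G x\<bar> \<le> K"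
    and B: "\<And>x. x \<ge> -a \<Longrightarrow> \<bar>G x\<bar> \<le> Bd"
  shows "rapid (\<lambda>t. G (t - a))"
proof (rule rapidI)
  fix m
  obtain Km where Km: "\<And>x. x \<ge> 1 \<Longrightarrow> x^m * \<bar>G x\<bar> \<le> Km" using K[of m] by blast
  have Km0: "Km \<ge> 0" using Km[of 1] by simp
  have B0: "Bd \<ge> 0" using B[of "-a"] by simp
  show "\<exists>C. \<forall>t\<ge>0. (1 + t) ^ m * \<bar>G (t - a)\<bar> \<le> C"
  proof (intro exI allI impI)
    fix t :: real assume t: "t \<ge> 0"
    show "(1 + t) ^ m * \<bar>G (t - a)\<bar> \<le> (2 + a)^m * (Km + Bd)"
    proof (cases "t - a \<ge> 1")
      case True
      define x where "x = t - a"
      have x1: "x \<ge> 1" using True by (simp add: x_def)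
      have "1 + t \<le> x * (2 + a)"
      proof -
        have "x * (1 + a) \<ge> 1 * (1 + a)" using x1 a by (intro mult_right_mono) auto
        then show ?thesis unfolding x_def by (simp add: algebra_simps)
      qed
      then have "(1 + t)^m \<le> (x * (2 + a))^m" using t by (intro power_mono) auto
      then have "(1 + t) ^ m * \<bar>G (t - a)\<bar> \<le> (x * (2 + a))^m * \<bar>G x\<bar>"
        unfolding x_def by (intro mult_right_mono) auto
      also have "\<dots> = (2 + a)^m * (x^m * \<bar>G x\<bar>)" by (simp add: power_mult_distrib)
      also have "\<dots> \<le> (2 + a)^m * Km" using Km[OF x1] a by (intro mult_left_mono) auto
      also have "\<dots> \<le> (2 + a)^m * (Km + Bd)" using B0 a by (intro mult_left_mono) auto
      finally show ?thesis .
    next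
      case False
      have "(1 + t)^m \<le> (2 + a)^m" using False t by (intro power_mono) auto
      moreover have "\<bar>G (t - a)\<bar> \<le> Bd" using B[of "t - a"] t by simp
      ultimately have "(1 + t) ^ m * \<bar>G (t - a)\<bar> \<le> (2 + a)^m * Bd"
        using t a by (intro mult_mono) auto
      also have "\<dots> \<le> (2 + a)^m * (Km + Bd)" using Km0 a by (intro mult_left_mono) auto
      finally show ?thesis .
    qed
  qed
qed

lemma dcc_pos: "diffs cc m > 0" using cc_pos[of "Suc m"] by (simp add: diffs_def del: cc.simps)

lemma g_decay: "\<exists>K. \<forall>x\<ge>1. x^m * \<bar>g x\<bar> \<le> K"
proof (intro exI allI impI)
  fix x :: real assume x: "x \<ge> 1"
  have y'p: "y' x > 0" using y'_pos x by simp
  have "x^m * \<bar>g x\<bar> = x^m * g x" using g_pos[of x] by simp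
  also have "\<dots> \<le> x^m * (1 / y' x)" using g_le[of x] x by (intro mult_left_mono) auto
  also have "\<dots> \<le> x^(4*m+3) * (1 / y' x)" using x y'p by (intro mult_right_mono pow_le_pow_ge1) auto
  also have "\<dots> \<le> x^(4*m+3) * (1 / (4 * diffs cc m * x^(4*m+3)))"
    using y'_ge[of x m] x dcc_pos[of m] y'p by (intro mult_left_mono divide_left_mono mult_pos_pos) auto
  also have "\<dots> = 1 / (4 * diffs cc m)" using x by simp
  finally show "x^m * \<bar>g x\<bar> \<le> 1 / (4 * diffs cc m)" .
qed

lemma g'_decay: "\<exists>K. \<forall>x\<ge>1. x^m * \<bar>g' x\<bar> \<le> K"
proof (intro exI allI impI)
  fix x :: real assume x: "x \<ge> 1"
  have yp: "y x > 0" using y_pos by simp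
  have "x^m * \<bar>g' x\<bar> \<le> x^m * (1 / y x)" using g'_abs_le[of x] x by (intro mult_left_mono) auto
  also have "\<dots> \<le> x^(4*m) * (1 / y x)" using x yp by (intro mult_right_mono pow_le_pow_ge1) auto
  also have "\<dots> \<le> x^(4*m) * (1 / (cc m * x^(4*m)))"
    using y_ge[of m x] x cc_pos[of m] yp by (intro mult_left_mono divide_left_mono mult_pos_pos) auto
  also have "\<dots> = 1 / cc m" using x by simp
  finally show "x^m * \<bar>g' x\<bar> \<le> 1 / cc m" .
qed

lemma rapid_fs: "rapid fs"
proof -
  have "rapid (\<lambda>t. g (t - aa))"
  proof (rule rapid_shift[where Bd = "g (-aa)"])
    show "aa \<ge> 0" using aa(1) by simp
    show "\<exists>K. \<forall>x\<ge>1. x^m * \<bar>g x\<bar> \<le> K" for m by (rule g_decay)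
    fix x assume "x \<ge> -aa"
    then show "\<bar>g x\<bar> \<le> g (-aa)" using g_antimono[of "-aa" x] g_pos[of x] by simp
  qed
  then have "rapid (\<lambda>t. (1 / g (-aa)) * g (t - aa))" by (rule rapid_cmult)
  then show ?thesis by (simp add: fs_def[abs_def])
qed

lemma rapid_fs': "rapid fs'"
proof -
  have "rapid (\<lambda>t. g' (t - aa))"
  proof (rule rapid_shift[where Bd = "- g' (-aa)"])
    show "aa \<ge> 0" using aa(1) by simp
    show "\<exists>K. \<forall>x\<ge>1. x^m * \<bar>g' x\<bar> \<le> K" for m by (rule g'_decay)
    fix x assume "x \<ge> -aa"
    then show "\<bar>g' x\<bar> \<le> - g' (-aa)" using g'_mono[of "-aa" x] g'_neg[of x] by simp
  qed
  then have "rapid (\<lambda>t. (1 / g (-aa)) * g' (t - aa))" by (rule rapid_cmult)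
  then show ?thesis by (simp add: fs'_def[abs_def])
qed

definition VV :: "real poly" where "VV = [:aa^2, -2*aa, 1:]"
lemma poly_VV: "poly VV t = (t - aa)^2" by (simp add: VV_def power2_eq_square algebra_simps)

fun PQ :: "nat \<Rightarrow> real poly \<times> real poly" where
  "PQ 0 = (1, 0)"
| "PQ (Suc k) = (pderiv (fst (PQ k)) + snd (PQ k) * VV, fst (PQ k) + pderiv (snd (PQ k)))"

definition DD :: "nat \<Rightarrow> real \<Rightarrow> real" where
  "DD k t = poly (fst (PQ k)) t * fs t + poly (snd (PQ k)) t * fs' t"

lemma DD_0: "DD 0 t = fs t" by (simp add: DD_def)

lemma DD_deriv: "(DD k has_real_derivative DD (Suc k) t) (at t)"
  unfolding DD_def[abs_def]
  by (auto intro!: derivative_eq_intros poly_DERIV fs_deriv fs'_deriv simp: poly_VV algebra_simps)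

lemma DD_rapid: "rapid (DD k)"
  unfolding DD_def[abs_def] by (intro rapid_add rapid_pb_mult rapid_fs rapid_fs' pb_poly)

lemma pow_le_1plus: "(t::real) \<ge> 0 \<Longrightarrow> t^m \<le> (1+t)^m"
  by (intro power_mono) auto

lemma schwartz_fs: "schwartz_halfline fs"
  unfolding schwartz_halfline_def
proof (intro exI[of _ DD] conjI allI impI)
  fix t :: real assume "t \<ge> 0" then show "DD 0 t = fs t" by (simp add: DD_0)
next
  fix k and t :: real assume "t \<ge> 0"
  show "(DD k has_vector_derivative DD (Suc k) t) (at t within {0..})"
    using DD_deriv[of k t] by (simp add: has_real_derivative_iff_has_vector_derivative[symmetric] has_field_derivative_at_within)
next
  fix k m
  obtain C where C: "\<And>t. t \<ge> 0 \<Longrightarrow> (1+t)^m * \<bar>DD k t\<bar> \<le> C" using DD_rapid[of k] unfolding rapid_def by blast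
  show "\<exists>C. \<forall>t\<ge>0. t ^ m * norm (DD k t) \<le> C"
  proof (intro exI allI impI)
    fix t :: real assume t: "t \<ge> 0"
    have "t ^ m * norm (DD k t) \<le> (1+t)^m * \<bar>DD k t\<bar>" using t pow_le_1plus[OF t, of m] by (simp add: mult_right_mono)
    also have "\<dots> \<le> C" using C[OF t] .
    finally show "t ^ m * norm (DD k t) \<le> C" .
  qed
qed

lemma at_Ici_nonbot: assumes t: "(t::real) \<ge> 0" shows "at t within {0..} \<noteq> bot"
proof
  assume b: "at t within {0..} = bot"
  have "at t within {t..t+1} = at_right t" by (rule at_within_Icc_at_right) simp
  moreover have "at t within {t..t+1} \<le> at t within {0..}" by (rule at_le) (use t in auto)
  ultimately have "at_right t = (bot :: real filter)" using b by (simp add: bot_unique)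
  then show False using trivial_limit_at_right_real[of t] by simp
qed

lemma hderiv_eq: "t \<ge> 0 \<Longrightarrow> (f has_vector_derivative d) (at t within {0..}) \<Longrightarrow> hderiv f t = d"
  unfolding hderiv_def by (rule vector_derivative_within[OF at_Ici_nonbot])

lemma hderiv_fs: "t \<ge> 0 \<Longrightarrow> hderiv fs t = fs' t"
  by (rule hderiv_eq) (use fs_deriv[of t] in \<open>auto simp: has_real_derivative_iff_has_vector_derivative[symmetric] has_field_derivative_at_within\<close>)

definition mI :: "nat \<Rightarrow> real \<Rightarrow> real" where "mI k t = (t - aa)^k * (fs t * fs t)"
definition pI :: "nat \<Rightarrow> real \<Rightarrow> real" where "pI k t = (t - aa)^k * (fs t * fs' t)"
definition qI :: "nat \<Rightarrow> real \<Rightarrow> real" where "qI k t = (t - aa)^k * (fs' t * fs' t)"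

lemma pb_s: "pb (\<lambda>t. (t - aa)^k)" by (intro pb_pow pb_diff pb_id pb_const)

lemma rapid_mI: "rapid (mI k)" unfolding mI_def[abs_def]
  by (intro rapid_pb_mult rapid_mult rapid_fs rapid_fs' pb_s)
lemma rapid_pI: "rapid (pI k)" unfolding pI_def[abs_def]
  by (intro rapid_pb_mult rapid_mult rapid_fs rapid_fs' pb_s)
lemma rapid_qI: "rapid (qI k)" unfolding qI_def[abs_def]
  by (intro rapid_pb_mult rapid_mult rapid_fs rapid_fs' pb_s)

lemma cont_mI: "continuous_on A (mI k)" unfolding mI_def[abs_def]
  by (intro continuous_at_imp_continuous_on ballI continuous_intros fs_cont)
lemma cont_pI: "continuous_on A (pI k)" unfolding pI_def[abs_def]
  by (intro continuous_at_imp_continuous_on ballI continuous_intros fs_cont fs'_cont)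
lemma cont_qI: "continuous_on A (qI k)" unfolding qI_def[abs_def]
  by (intro continuous_at_imp_continuous_on ballI continuous_intros fs'_cont)

lemma int_mI: "set_integrable lborel {0..} (mI k)" by (rule rapid_integrable[OF rapid_mI cont_mI])
lemma int_pI: "set_integrable lborel {0..} (pI k)" by (rule rapid_integrable[OF rapid_pI cont_pI])
lemma int_qI: "set_integrable lborel {0..} (qI k)" by (rule rapid_integrable[OF rapid_qI cont_qI])

lemma dpow: "((\<lambda>t. (t - aa)^k) has_real_derivative real k * (t - aa)^(k - 1)) (at t)"
  by (auto intro!: derivative_eq_intros simp: One_nat_def)

lemma d_mI: "(mI k has_real_derivative real k * mI (k-1) t + 2 * pI k t) (at t)"
  unfolding mI_def[abs_def] pI_def
  by (auto intro!: derivative_eq_intros dpow fs_deriv fs'_deriv simp: algebra_simps)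

lemma d_pI: "(pI k has_real_derivative real k * pI (k-1) t + qI k t + mI (k+2) t) (at t)"
  unfolding pI_def[abs_def] mI_def qI_def
  by (auto intro!: derivative_eq_intros dpow fs_deriv fs'_deriv simp: algebra_simps power_add power2_eq_square)

lemma d_qI: "(qI k has_real_derivative real k * qI (k-1) t + 2 * pI (k+2) t) (at t)"
  unfolding qI_def[abs_def] pI_def
  by (auto intro!: derivative_eq_intros dpow fs_deriv fs'_deriv simp: algebra_simps power_add power2_eq_square)

lemma lint2:
  fixes f1 f2 :: "real \<Rightarrow> real"
  assumes a1: "set_integrable lborel {0..} f1" and a2: "set_integrable lborel {0..} f2"
  shows "(LINT t:{0..}|lborel. c1 * f1 t + c2 * f2 t) = c1 * (LINT t:{0..}|lborel. f1 t) + c2 * (LINT t:{0..}|lborel. f2 t)"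
proof -
  have i1: "set_integrable lborel {0..} (\<lambda>t. c1 * f1 t)" by (rule set_integrable_mult_right) (use a1 in auto)
  have i2: "set_integrable lborel {0..} (\<lambda>t. c2 * f2 t)" by (rule set_integrable_mult_right) (use a2 in auto)
  have "(LINT t:{0..}|lborel. c1 * f1 t + c2 * f2 t) = (LINT t:{0..}|lborel. c1 * f1 t) + (LINT t:{0..}|lborel. c2 * f2 t)"
    by (rule set_integral_add(2)[OF i1 i2])
  then show ?thesis by simp
qed

lemma lint3:
  fixes f1 f2 f3 :: "real \<Rightarrow> real"
  assumes a1: "set_integrable lborel {0..} f1" and a2: "set_integrable lborel {0..} f2" and a3: "set_integrable lborel {0..} f3"
  shows "(LINT t:{0..}|lborel. c1 * f1 t + f2 t + f3 t) = c1 * (LINT t:{0..}|lborel. f1 t) + (LINT t:{0..}|lborel. f2 t) + (LINT t:{0..}|lborel. f3 t)"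
proof -
  have i1: "set_integrable lborel {0..} (\<lambda>t. c1 * f1 t)" by (rule set_integrable_mult_right) (use a1 in auto)
  have i12: "set_integrable lborel {0..} (\<lambda>t. c1 * f1 t + f2 t)" by (rule set_integral_add(1)[OF i1 a2])
  have "(LINT t:{0..}|lborel. c1 * f1 t + f2 t + f3 t) = (LINT t:{0..}|lborel. c1 * f1 t + f2 t) + (LINT t:{0..}|lborel. f3 t)"
    by (rule set_integral_add(2)[OF i12 a3])
  also have "(LINT t:{0..}|lborel. c1 * f1 t + f2 t) = (LINT t:{0..}|lborel. c1 * f1 t) + (LINT t:{0..}|lborel. f2 t)"
    by (rule set_integral_add(2)[OF i1 a2])
  finally show ?thesis by simp
qed

definition Mint :: "nat \<Rightarrow> real" where "Mint k = (LINT t:{0..}|lborel. mI k t)"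
definition Pint :: "nat \<Rightarrow> real" where "Pint k = (LINT t:{0..}|lborel. pI k t)"
definition Qint :: "nat \<Rightarrow> real" where "Qint k = (LINT t:{0..}|lborel. qI k t)"

lemma ftc_at: "(\<And>t. (F has_real_derivative F' t) (at t)) \<Longrightarrow> (\<And>t. t \<ge> 0 \<Longrightarrow> (F has_real_derivative F' t) (at t within {0..}))"
  by (rule has_field_derivative_at_within)

lemma ID_m: "real k * Mint (k-1) + 2 * Pint k = - ((-aa)^k)"
proof -
  have "(LINT t:{0..}|lborel. real k * mI (k-1) t + 2 * pI k t) = - mI k 0"
  proof (rule ftc0)
    show "(mI k has_real_derivative real k * mI (k-1) t + 2 * pI k t) (at t within {0..})" for t
      by (rule has_field_derivative_at_within[OF d_mI])
    show "continuous_on {0..} (\<lambda>t. real k * mI (k-1) t + 2 * pI k t)"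
      by (intro continuous_intros cont_mI cont_pI)
    show "rapid (mI k)" by (rule rapid_mI)
    show "rapid (\<lambda>t. real k * mI (k-1) t + 2 * pI k t)" by (intro rapid_add rapid_cmult rapid_mI rapid_pI)
  qed
  moreover have "(LINT t:{0..}|lborel. real k * mI (k-1) t + 2 * pI k t) = real k * Mint (k-1) + 2 * Pint k"
    unfolding Mint_def Pint_def by (rule lint2[OF int_mI int_pI])
  ultimately show ?thesis by (simp add: mI_def fs_0)
qed

lemma ID_p: "real k * Pint (k-1) + Qint k + Mint (k+2) = (-aa)^k * aa"
proof -
  have "(LINT t:{0..}|lborel. real k * pI (k-1) t + qI k t + mI (k+2) t) = - pI k 0"
  proof (rule ftc0)
    show "(pI k has_real_derivative real k * pI (k-1) t + qI k t + mI (k+2) t) (at t within {0..})" for t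
      by (rule has_field_derivative_at_within[OF d_pI])
    show "continuous_on {0..} (\<lambda>t. real k * pI (k-1) t + qI k t + mI (k+2) t)"
      by (intro continuous_intros cont_mI cont_pI cont_qI)
    show "rapid (pI k)" by (rule rapid_pI)
    show "rapid (\<lambda>t. real k * pI (k-1) t + qI k t + mI (k+2) t)" by (intro rapid_add rapid_cmult rapid_mI rapid_pI rapid_qI)
  qed
  moreover have "(LINT t:{0..}|lborel. real k * pI (k-1) t + qI k t + mI (k+2) t) = real k * Pint (k-1) + Qint k + Mint (k+2)"
    unfolding Mint_def Pint_def Qint_def by (rule lint3[OF int_pI int_qI int_mI])
  ultimately show ?thesis by (simp add: pI_def fs_0 fs'_0)
qed

lemma ID_q: "real k * Qint (k-1) + 2 * Pint (k+2) = - ((-aa)^k * aa^2)"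
proof -
  have "(LINT t:{0..}|lborel. real k * qI (k-1) t + 2 * pI (k+2) t) = - qI k 0"
  proof (rule ftc0)
    show "(qI k has_real_derivative real k * qI (k-1) t + 2 * pI (k+2) t) (at t within {0..})" for t
      by (rule has_field_derivative_at_within[OF d_qI])
    show "continuous_on {0..} (\<lambda>t. real k * qI (k-1) t + 2 * pI (k+2) t)"
      by (intro continuous_intros cont_qI cont_pI)
    show "rapid (qI k)" by (rule rapid_qI)
    show "rapid (\<lambda>t. real k * qI (k-1) t + 2 * pI (k+2) t)" by (intro rapid_add rapid_cmult rapid_qI rapid_pI)
  qed
  moreover have "(LINT t:{0..}|lborel. real k * qI (k-1) t + 2 * pI (k+2) t) = real k * Qint (k-1) + 2 * Pint (k+2)"
    unfolding Qint_def Pint_def by (rule lint2[OF int_qI int_pI])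
  ultimately show ?thesis by (simp add: qI_def fs'_0 power2_eq_square)
qed

lemma fs_vals:
  shows "Qint 0 + Mint 2 = aa" "Pint 0 = - 1/2" "Mint 1 = 0" "Mint 2 = aa / 4" "Qint 0 = 3 * aa / 4"
    "Mint 3 = (1 - 2 * aa^2) / 6" "Qint 1 = (1 - 2 * aa^2) / 3"
proof -
  have p0: "Qint 0 + Mint 2 = aa" using ID_p[of 0] by (simp add: eval_nat_numeral algebra_simps)
  have m0: "2 * Pint 0 = -1" using ID_m[of 0] by (simp add: eval_nat_numeral algebra_simps)
  have m2: "2 * Mint 1 + 2 * Pint 2 = -(aa^2)" using ID_m[of 2] by (simp add: eval_nat_numeral algebra_simps)
  have q0: "2 * Pint 2 = -(aa^2)" using ID_q[of 0] by (simp add: eval_nat_numeral algebra_simps)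
  have m3: "3 * Mint 2 + 2 * Pint 3 = aa^3" using ID_m[of 3] by (simp add: eval_nat_numeral algebra_simps)
  have q1: "Qint 0 + 2 * Pint 3 = aa^3" using ID_q[of 1] by (simp add: eval_nat_numeral algebra_simps)
  have p1: "Pint 0 + Qint 1 + Mint 3 = -(aa^2)" using ID_p[of 1] by (simp add: eval_nat_numeral algebra_simps)
  have q2: "2 * Qint 1 + 2 * Pint 4 = -(aa^4)" using ID_q[of 2] by (simp add: eval_nat_numeral algebra_simps)
  have m4: "4 * Mint 3 + 2 * Pint 4 = -(aa^4)" using ID_m[of 4] by (simp add: eval_nat_numeral algebra_simps)
  show "Qint 0 + Mint 2 = aa" by (rule p0)
  show "Pint 0 = - 1/2" using m0 by simp
  show "Mint 1 = 0" using m2 q0 by simp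
  show "Mint 2 = aa / 4" using p0 m3 q1 by simp
  show "Qint 0 = 3 * aa / 4" using p0 m3 q1 by simp
  show "Mint 3 = (1 - 2 * aa^2) / 6" using p1 q2 m4 m0 by simp
  show "Qint 1 = (1 - 2 * aa^2) / 3" using p1 q2 m4 m0 by simp
qed

lemma W_pb: "pb (\<lambda>t. W (t - \<xi>))"
proof -
  have "\<exists>x\<in>{-\<bar>\<xi>\<bar>-1..1}. \<forall>z\<in>{-\<bar>\<xi>\<bar>-1..1}. W z \<le> W x"
    by (rule continuous_attains_sup) (use W_cont in \<open>auto intro!: continuous_at_imp_continuous_on\<close>)
  then obtain s0 where s0: "\<And>z. z \<in> {-\<bar>\<xi>\<bar>-1..1} \<Longrightarrow> W z \<le> W s0" by blast
  define Mx where "Mx = W s0"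
  have Mx0: "Mx > 0" using W_pos unfolding Mx_def by simp
  show ?thesis
  proof (rule pbI[of _ "Mx + 2 * \<bar>\<xi>\<bar> + 2" 1])
    fix t :: real assume t: "t \<ge> 0"
    have Wp: "W (t - \<xi>) > 0" using W_pos by simp
    have "W (t - \<xi>) \<le> Mx + 2 * \<bar>\<xi>\<bar> + 2 * t"
    proof (cases "t - \<xi> \<le> 1")
      case True
      then have "W (t - \<xi>) \<le> Mx" using s0[of "t - \<xi>"] t unfolding Mx_def by simp
      then show ?thesis using t by simp
    next
      case False
      then have "W (t - \<xi>) \<le> 2 * (t - \<xi>)" using R3[of "t - \<xi>"] by simp
      then show ?thesis using Mx0 t by (smt (verit))
    qed
    also have "\<dots> \<le> (Mx + 2 * \<bar>\<xi>\<bar> + 2) * (1 + t)^1" using t Mx0 by (simp add: algebra_simps)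
    finally show "\<bar>W (t - \<xi>)\<bar> \<le> (Mx + 2 * \<bar>\<xi>\<bar> + 2) * (1 + t)^1" using Wp by simp
  qed
qed

lemma onept: "(t::real) \<ge> 0 \<Longrightarrow> (1+t)^m \<le> 2^m * (1 + t^m)"
proof -
  assume t: "t \<ge> 0"
  show ?thesis
  proof (cases "t \<le> 1")
    case True
    then have "(1+t)^m \<le> 2^m" using t by (intro power_mono) auto
    also have "\<dots> \<le> 2^m * (1 + t^m)" using t by simp
    finally show ?thesis .
  next
    case False
    then have "(1+t)^m \<le> (2*t)^m" using t by (intro power_mono) auto
    also have "\<dots> = 2^m * t^m" by (simp add: power_mult_distrib)
    also have "\<dots> \<le> 2^m * (1 + t^m)" by simp
    finally show ?thesis .
  qed
qed

lemma rapid_of_bounds: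
  fixes Dk :: "real \<Rightarrow> complex" and L :: "complex \<Rightarrow> real"
  assumes b: "\<And>m. \<exists>C. \<forall>t\<ge>0. t^m * norm (Dk t) \<le> C" and L: "\<And>z. \<bar>L z\<bar> \<le> norm z"
  shows "rapid (\<lambda>t. L (Dk t))"
proof (rule rapidI)
  fix m
  obtain C0 where C0: "\<And>t. t \<ge> 0 \<Longrightarrow> t^0 * norm (Dk t) \<le> C0" using b[of 0] by blast
  obtain Cm where Cm: "\<And>t. t \<ge> 0 \<Longrightarrow> t^m * norm (Dk t) \<le> Cm" using b[of m] by blast
  show "\<exists>C. \<forall>t\<ge>0. (1 + t) ^ m * \<bar>L (Dk t)\<bar> \<le> C"
  proof (intro exI allI impI)
    fix t :: real assume t: "t \<ge> 0"
    have "(1 + t) ^ m * \<bar>L (Dk t)\<bar> \<le> (2^m * (1 + t^m)) * norm (Dk t)"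
      using onept[OF t, of m] L[of "Dk t"] t by (intro mult_mono) auto
    also have "\<dots> = 2^m * (t^0 * norm (Dk t) + t^m * norm (Dk t))" by (simp add: algebra_simps)
    also have "\<dots> \<le> 2^m * (C0 + Cm)" using C0[OF t] Cm[OF t] by (intro mult_left_mono add_mono) auto
    finally show "(1 + t) ^ m * \<bar>L (Dk t)\<bar> \<le> 2^m * (C0 + Cm)" .
  qed
qed

lemma set_integral_nonneg0:
  fixes R :: "real \<Rightarrow> real"
  assumes "\<And>t. t \<ge> 0 \<Longrightarrow> R t \<ge> 0"
  shows "(LINT t:{0..}|lborel. R t) \<ge> 0"
  unfolding set_lebesgue_integral_def
  by (rule Bochner_Integration.integral_nonneg) (use assms in \<open>auto simp: indicator_def\<close>)

lemma lint_cong0: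
  fixes f1 f2 :: "real \<Rightarrow> real"
  shows "(\<And>t. t \<ge> 0 \<Longrightarrow> f1 t = f2 t) \<Longrightarrow> (LINT t:{0..}|lborel. f1 t) = (LINT t:{0..}|lborel. f2 t)"
  by (rule set_lebesgue_integral_cong) auto

lemma energy_lower:
  fixes f :: "real \<Rightarrow> complex" and D :: "nat \<Rightarrow> real \<Rightarrow> complex" and \<xi> :: real
  assumes D0: "\<forall>t\<ge>0. D 0 t = f t"
    and Dd: "\<forall>k. \<forall>t\<ge>0. (D k has_vector_derivative D (Suc k) t) (at t within {0..})"
    and Db: "\<forall>k m. \<exists>C. \<forall>t\<ge>0. t ^ m * norm (D k t) \<le> C"
  shows "(LINT t:{0..}|lborel. (cmod (hderiv f t))\<^sup>2 + (t - \<xi>)\<^sup>2 * (cmod (f t))\<^sup>2) \<ge> W (-\<xi>) * (cmod (f 0))\<^sup>2"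
proof -
  define P where "P t = Re (D 0 t)" for t
  define Q where "Q t = Im (D 0 t)" for t
  define P1 where "P1 t = Re (D 1 t)" for t
  define Q1 where "Q1 t = Im (D 1 t)" for t
  define u where "u t = - W (t - \<xi>)" for t
  define u' where "u' t = (t - \<xi>)^2 - (u t)^2" for t
  have du: "(u has_real_derivative u' t) (at t)" for t
  proof -
    have "((\<lambda>t. W (t - \<xi>)) has_real_derivative ((W (t - \<xi>))^2 - (t - \<xi>)^2) * 1) (at t)"
      by (rule DERIV_chain2[OF W_deriv]) (auto intro!: derivative_eq_intros)
    then show ?thesis unfolding u_def[abs_def] u'_def by (auto intro!: derivative_eq_intros)
  qed
  have dD: "t \<ge> 0 \<Longrightarrow> (D k has_vector_derivative D (Suc k) t) (at t within {0..})" for k t using Dd by blast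
  have dP: "t \<ge> 0 \<Longrightarrow> (P has_real_derivative P1 t) (at t within {0..})" for t
    unfolding P_def[abs_def] P1_def has_real_derivative_iff_has_vector_derivative
    using bounded_linear.has_vector_derivative[OF bounded_linear_Re dD[of t 0]] by simp
  have dQ: "t \<ge> 0 \<Longrightarrow> (Q has_real_derivative Q1 t) (at t within {0..})" for t
    unfolding Q_def[abs_def] Q1_def has_real_derivative_iff_has_vector_derivative
    using bounded_linear.has_vector_derivative[OF bounded_linear_Im dD[of t 0]] by simp
  have contD: "continuous_on {0..} (D k)" for k
  proof -
    have "continuous (at t within {0..}) (D k)" if "t \<in> {0..}" for t
      using has_vector_derivative_continuous[OF dD[of t k]] that by simp
    then show ?thesis using continuous_on_eq_continuous_within by blast
  qed
  have cP: "continuous_on {0..} P" "continuous_on {0..} Q" "continuous_on {0..} P1" "continuous_on {0..} Q1"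
    unfolding P_def[abs_def] Q_def[abs_def] P1_def[abs_def] Q1_def[abs_def]
    by (intro continuous_intros contD)+
  have cu: "continuous_on {0..} u" "continuous_on {0..} u'"
    unfolding u_def[abs_def] u'_def[abs_def]
    by (intro continuous_at_imp_continuous_on ballI continuous_intros
        continuous_at_compose[OF _ W_cont, unfolded o_def] | simp)+
  have rP: "rapid P" "rapid Q" "rapid P1" "rapid Q1"
    unfolding P_def[abs_def] Q_def[abs_def] P1_def[abs_def] Q1_def[abs_def]
    by (intro rapid_of_bounds; use Db abs_Re_le_cmod abs_Im_le_cmod in blast)+
  have pu: "pb u" unfolding u_def[abs_def] by (intro pb_minus W_pb)
  have pu': "pb u'" unfolding u'_def[abs_def] using pu by (intro pb_diff pb_pow pb_id pb_const) auto
  define R where "R t = (P1 t - u t * P t)^2 + (Q1 t - u t * Q t)^2" for t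
  define G where "G t = u t * ((P t)^2 + (Q t)^2)" for t
  define G' where "G' t = u' t * ((P t)^2 + (Q t)^2) + 2 * u t * (P t * P1 t + Q t * Q1 t)" for t
  have rR: "rapid R" unfolding R_def[abs_def] power2_eq_square
    using rP pu by (intro rapid_add rapid_mult rapid_diff rapid_pb_mult) auto
  have rG: "rapid G" unfolding G_def[abs_def] power2_eq_square
    using rP pu by (intro rapid_add rapid_mult rapid_pb_mult) auto
  have rG': "rapid G'" unfolding G'_def[abs_def] power2_eq_square
    using rP pu pu' by (intro rapid_add rapid_mult rapid_pb_mult pb_mult pb_const) auto
  have cR: "continuous_on {0..} R" unfolding R_def[abs_def] using cP cu by (intro continuous_intros) auto
  have cG': "continuous_on {0..} G'" unfolding G'_def[abs_def] using cP cu by (intro continuous_intros) auto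
  have dG: "t \<ge> 0 \<Longrightarrow> (G has_real_derivative G' t) (at t within {0..})" for t
    unfolding G_def[abs_def] G'_def
    by (auto intro!: derivative_eq_intros dP dQ has_field_derivative_at_within[OF du] simp: algebra_simps power2_eq_square)
  have hd: "t \<ge> 0 \<Longrightarrow> hderiv f t = D 1 t" for t
  proof -
    assume t: "t \<ge> 0"
    have "(f has_vector_derivative D (Suc 0) t) (at t within {0..})"
      by (rule has_vector_derivative_transform[OF _ _ dD[OF t, of 0]]) (use t D0 in auto)
    then show ?thesis using hderiv_eq[OF t] by simp
  qed
  have pt: "(cmod (hderiv f t))\<^sup>2 + (t - \<xi>)\<^sup>2 * (cmod (f t))\<^sup>2 = R t + G' t" if t: "t \<ge> 0" for t
  proof -
    have "(cmod (hderiv f t))\<^sup>2 = (P1 t)^2 + (Q1 t)^2" using hd[OF t] by (simp add: cmod_power2 P1_def Q1_def)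
    moreover have "(cmod (f t))\<^sup>2 = (P t)^2 + (Q t)^2" using D0 t by (simp add: cmod_power2 P_def Q_def)
    ultimately show ?thesis unfolding R_def G'_def u'_def by (simp add: algebra_simps power2_eq_square)
  qed
  have "(LINT t:{0..}|lborel. (cmod (hderiv f t))\<^sup>2 + (t - \<xi>)\<^sup>2 * (cmod (f t))\<^sup>2) = (LINT t:{0..}|lborel. R t + G' t)"
    by (rule lint_cong0) (rule pt)
  also have "\<dots> = (LINT t:{0..}|lborel. R t) + (LINT t:{0..}|lborel. G' t)"
    by (rule set_integral_add(2)[OF rapid_integrable[OF rR cR] rapid_integrable[OF rG' cG']])
  also have "(LINT t:{0..}|lborel. G' t) = - G 0"
    by (rule ftc0[OF dG cG' rG rG'])
  also have "- G 0 = W (-\<xi>) * (cmod (f 0))\<^sup>2"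
    using D0 by (simp add: G_def u_def P_def Q_def cmod_power2)
  finally show ?thesis using set_integral_nonneg0[of R] by (simp add: R_def)
qed

lemma schwartz_fsc: "schwartz_halfline (\<lambda>t. complex_of_real (fs t))"
  unfolding schwartz_halfline_def
proof (intro exI[of _ "\<lambda>k t. complex_of_real (DD k t)"] conjI allI impI)
  fix t :: real assume "t \<ge> 0" then show "complex_of_real (DD 0 t) = complex_of_real (fs t)" by (simp add: DD_0)
next
  fix k and t :: real assume "t \<ge> 0"
  show "((\<lambda>t. complex_of_real (DD k t)) has_vector_derivative complex_of_real (DD (Suc k) t)) (at t within {0..})"
    by (rule has_vector_derivative_of_real) (rule has_field_derivative_at_within[OF DD_deriv])
next
  fix k m
  obtain C where C: "\<And>t. t \<ge> 0 \<Longrightarrow> (1+t)^m * \<bar>DD k t\<bar> \<le> C" using DD_rapid[of k] unfolding rapid_def by blast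
  show "\<exists>C. \<forall>t\<ge>0. t ^ m * norm (complex_of_real (DD k t)) \<le> C"
  proof (intro exI allI impI)
    fix t :: real assume t: "t \<ge> 0"
    have "t ^ m * norm (complex_of_real (DD k t)) \<le> (1+t)^m * \<bar>DD k t\<bar>" using t pow_le_1plus[OF t, of m] by (simp add: mult_right_mono)
    also have "\<dots> \<le> C" using C[OF t] .
    finally show "t ^ m * norm (complex_of_real (DD k t)) \<le> C" .
  qed
qed

lemma hderiv_fsc: "t \<ge> 0 \<Longrightarrow> hderiv (\<lambda>t. complex_of_real (fs t)) t = complex_of_real (fs' t)"
  by (rule hderiv_eq) (auto intro!: has_vector_derivative_of_real has_field_derivative_at_within fs_deriv)

lemma energy_fs: "(LINT t:{0..}|lborel. (hderiv fs t)\<^sup>2 + (t - aa)\<^sup>2 * (fs t)\<^sup>2) = aa"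
proof -
  have "(LINT t:{0..}|lborel. (hderiv fs t)\<^sup>2 + (t - aa)\<^sup>2 * (fs t)\<^sup>2) = (LINT t:{0..}|lborel. qI 0 t + mI 2 t)"
    by (rule lint_cong0) (simp add: hderiv_fs qI_def mI_def power2_eq_square)
  also have "\<dots> = Qint 0 + Mint 2" unfolding Qint_def Mint_def by (rule set_integral_add(2)[OF int_qI int_mI])
  finally show ?thesis using fs_vals(1) by simp
qed

lemma alpha_hat_eq: "alpha_hat = aa"
  unfolding alpha_hat_def
proof (rule cInf_eq_minimum)
  let ?fc = "\<lambda>t. complex_of_real (fs t)"
  have "(LINT t:{0..}|lborel. (cmod (hderiv ?fc t))\<^sup>2 + (t - aa)\<^sup>2 * (cmod (?fc t))\<^sup>2)
      = (LINT t:{0..}|lborel. (hderiv fs t)\<^sup>2 + (t - aa)\<^sup>2 * (fs t)\<^sup>2)"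
    by (rule lint_cong0) (simp add: hderiv_fsc hderiv_fs)
  also have "\<dots> = aa" by (rule energy_fs)
  finally have e: "(LINT t:{0..}|lborel. (cmod (hderiv ?fc t))\<^sup>2 + (t - aa)\<^sup>2 * (cmod (?fc t))\<^sup>2) / (cmod (?fc 0))\<^sup>2 = aa"
    by (simp add: fs_0)
  show "aa \<in> {(LINT t:{0..}|lborel. (cmod (hderiv f t))\<^sup>2 + (t - \<xi>)\<^sup>2 * (cmod (f t))\<^sup>2) / (cmod (f 0))\<^sup>2
                   | (f :: real \<Rightarrow> complex) \<xi>. schwartz_halfline f \<and> f 0 \<noteq> 0}"
    using e schwartz_fsc fs_0 by (intro CollectI exI[of _ ?fc] exI[of _ aa]) auto
next
  fix x assume "x \<in> {(LINT t:{0..}|lborel. (cmod (hderiv f t))\<^sup>2 + (t - \<xi>)\<^sup>2 * (cmod (f t))\<^sup>2) / (cmod (f 0))\<^sup>2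
                   | (f :: real \<Rightarrow> complex) \<xi>. schwartz_halfline f \<and> f 0 \<noteq> 0}"
  then obtain f :: "real \<Rightarrow> complex" and \<xi> where x: "x = (LINT t:{0..}|lborel. (cmod (hderiv f t))\<^sup>2 + (t - \<xi>)\<^sup>2 * (cmod (f t))\<^sup>2) / (cmod (f 0))\<^sup>2"
    and s: "schwartz_halfline f" and f0: "f 0 \<noteq> 0" by blast
  from s obtain D where D0: "\<forall>t\<ge>0. D 0 t = f t"
    and Dd: "\<forall>k. \<forall>t\<ge>0. (D k has_vector_derivative D (Suc k) t) (at t within {0..})"
    and Db: "\<forall>k m. \<exists>C. \<forall>t\<ge>0. t ^ m * norm (D k t) \<le> C"
    unfolding schwartz_halfline_def by blast
  have E: "(LINT t:{0..}|lborel. (cmod (hderiv f t))\<^sup>2 + (t - \<xi>)\<^sup>2 * (cmod (f t))\<^sup>2) \<ge> W (-\<xi>) * (cmod (f 0))\<^sup>2"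
    by (rule energy_lower[OF D0 Dd Db])
  have c0: "(cmod (f 0))\<^sup>2 > 0" using f0 by simp
  have "aa * (cmod (f 0))\<^sup>2 \<le> W (-\<xi>) * (cmod (f 0))\<^sup>2" using aa(3)[of "-\<xi>"] c0 by (intro mult_right_mono) auto
  then have "aa * (cmod (f 0))\<^sup>2 \<le> (LINT t:{0..}|lborel. (cmod (hderiv f t))\<^sup>2 + (t - \<xi>)\<^sup>2 * (cmod (f t))\<^sup>2)"
    using E by linarith
  then show "aa \<le> x" unfolding x using c0 by (simp add: pos_le_divide_eq)
qed

theorem proposition2p1:
  "\<exists>f :: real \<Rightarrow> real.
     schwartz_halfline f \<and>
     (\<forall>t>0. f t > 0) \<and> f 0 = 1 \<and>
     (LINT t:{0..}|lborel. (hderiv f t)\<^sup>2 + (t - alpha_hat)\<^sup>2 * (f t)\<^sup>2) = alpha_hat \<and>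
     (LINT t:{0..}|lborel. (t - alpha_hat) * (f t)\<^sup>2) = 0 \<and>
     (LINT t:{0..}|lborel. (t - alpha_hat)\<^sup>2 * (f t)\<^sup>2) = alpha_hat / 4 \<and>
     (LINT t:{0..}|lborel. (t - alpha_hat) ^ 3 * (f t)\<^sup>2) = (1 - 2 * alpha_hat\<^sup>2) / 6 \<and>
     (LINT t:{0..}|lborel. hderiv f t * f t) = - 1 / 2 \<and>
     (LINT t:{0..}|lborel. t * (hderiv f t)\<^sup>2) = 1 / 3 + alpha_hat\<^sup>2 / 12"
proof (intro exI[of _ fs] conjI allI impI)
  show "schwartz_halfline fs" by (rule schwartz_fs)
  show "fs t > 0" for t by (rule fs_pos)
  show "fs 0 = 1" by (rule fs_0)
  show "(LINT t:{0..}|lborel. (hderiv fs t)\<^sup>2 + (t - alpha_hat)\<^sup>2 * (fs t)\<^sup>2) = alpha_hat"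
    unfolding alpha_hat_eq by (rule energy_fs)
  have "(LINT t:{0..}|lborel. (t - aa) * (fs t)\<^sup>2) = Mint 1"
    unfolding Mint_def by (rule lint_cong0) (simp add: mI_def power2_eq_square)
  then show "(LINT t:{0..}|lborel. (t - alpha_hat) * (fs t)\<^sup>2) = 0" unfolding alpha_hat_eq using fs_vals(3) by simp
  have "(LINT t:{0..}|lborel. (t - aa)\<^sup>2 * (fs t)\<^sup>2) = Mint 2"
    unfolding Mint_def by (rule lint_cong0) (simp add: mI_def power2_eq_square)
  then show "(LINT t:{0..}|lborel. (t - alpha_hat)\<^sup>2 * (fs t)\<^sup>2) = alpha_hat / 4" unfolding alpha_hat_eq using fs_vals(4) by simp
  have "(LINT t:{0..}|lborel. (t - aa) ^ 3 * (fs t)\<^sup>2) = Mint 3"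
    unfolding Mint_def by (rule lint_cong0) (simp add: mI_def power2_eq_square)
  then show "(LINT t:{0..}|lborel. (t - alpha_hat) ^ 3 * (fs t)\<^sup>2) = (1 - 2 * alpha_hat\<^sup>2) / 6" unfolding alpha_hat_eq using fs_vals(6) by simp
  have "(LINT t:{0..}|lborel. hderiv fs t * fs t) = Pint 0"
    unfolding Pint_def by (rule lint_cong0) (simp add: pI_def hderiv_fs)
  then show "(LINT t:{0..}|lborel. hderiv fs t * fs t) = - 1 / 2" using fs_vals(2) by simp
  have "(LINT t:{0..}|lborel. t * (hderiv fs t)\<^sup>2) = (LINT t:{0..}|lborel. 1 * qI 1 t + aa * qI 0 t)"
    by (rule lint_cong0) (simp add: qI_def hderiv_fs power2_eq_square algebra_simps)
  also have "\<dots> = 1 * Qint 1 + aa * Qint 0" unfolding Qint_def by (rule lint2[OF int_qI int_qI])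
  also have "\<dots> = 1 / 3 + aa\<^sup>2 / 12"
  proof -
    have h1: "Qint 1 = (1 - 2 * aa^2) / 3" by (rule fs_vals(7))
    have h2: "aa * Qint 0 = 3 * aa^2 / 4" using fs_vals(5) by (simp add: power2_eq_square)
    show ?thesis unfolding h2 mult_1 h1 by (simp add: field_simps)
  qed
  finally show "(LINT t:{0..}|lborel. t * (hderiv fs t)\<^sup>2) = 1 / 3 + alpha_hat\<^sup>2 / 12" unfolding alpha_hat_eq .
qed

end
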